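(* Let $N=[n]$, let $v:2^N\to\mathbb{R}_+$ be a gross substitutes valuation, let $X$ be a GS-consistent decision map for $v$, and let $p=(p_1,\dots,p_n)$ be a vector of independent random variables forming a mixed Nash equilibrium of the pricing game defined by $v$ and $X$. Then for every seller $i$: if $v(\{i\}\mid N\setminus\{i\})>0$, then $p_i=v(\{i\}\mid N\setminus\{i\})$ and $i\in X(p)$ deterministically (with probability $1$); and if $v(\{i\}\mid N\setminus\{i\})=0$, then $\mathbb{E}[u_i(p)]=0$.
   Context: Pricing game: $N=[n]$ services, service $i$ controlled by seller $i$. Buyer valuation $v:2^N\to\mathbb{R}_+$, monotone, $v(\emptyset)=0$. Marginal value $v(T\mid S)=v(S\cup T)-v(S)$. For $p\in\mathbb{R}^n_+$, $p(S)=\sum_{j\in S}p_j$, $D(v;p)=\arg\max_{S\subseteq N}(v(S)-p(S))$. $v$ is gross substitutes if for every $p$, every $S\in D(v;p)$ and every $p'\ge p$ there is $T\in D(v;p')$ with $S\cap\{j:p_j=p'_j\}\subseteq T$. A decision map is $X:\mathbb{R}^n_+\to2^N$ with $X(p)\in D(v;p)$ for all $p$; it is GS-consistent if for all $p'\ge p$, $X(p)\cap\{j:p_j=p'_j\}\subseteq X(p')$. Seller $i$'s utility is $u_i(p)=p_i\mathbf{1}\{i\in X(p)\}$. A mixed Nash equilibrium is a vector of independent $\mathbb{R}_+$-valued random variables $p=(p_1,\dots,p_n)$ with $\mathbb{E}[u_i(p_i,p_{-i})]\ge\mathbb{E}[u_i(p_i',p_{-i})]$ for all $i$ and all $p_i'\in\mathbb{R}_+$.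 *)

theory Defs
  imports "HOL-Probability.Probability"
begin

text \<open>Services are the elements of a finite type 'a (playing the role of N = [n]).
  Price vectors are functions 'a => real; R^n_+ is the set of nonnegative ones.\<close>

definition price_sum :: "('a \<Rightarrow> real) \<Rightarrow> 'a set \<Rightarrow> real" where
  "price_sum p S = (\<Sum>j\<in>S. p j)"

definition marginal :: "('a set \<Rightarrow> real) \<Rightarrow> 'a set \<Rightarrow> 'a set \<Rightarrow> real" where
  "marginal v T S = v (S \<union> T) - v S"

definition valuation :: "('a set \<Rightarrow> real) \<Rightarrow> bool" where
  "valuation v \<longleftrightarrow> v {} = 0 \<and> (\<forall>S. v S \<ge> 0) \<and> (\<forall>S T. S \<subseteq> T \<longrightarrow> v S \<le> v T)"

definition demand :: "('a set \<Rightarrow> real) \<Rightarrow> ('a \<Rightarrow> real) \<Rightarrow> 'a set set" where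
  "demand v p = {S. \<forall>T. v T - price_sum p T \<le> v S - price_sum p S}"

definition gross_substitutes :: "('a set \<Rightarrow> real) \<Rightarrow> bool" where
  "gross_substitutes v \<longleftrightarrow>
     (\<forall>p p' S. (\<forall>j. 0 \<le> p j) \<longrightarrow> p \<le> p' \<longrightarrow> S \<in> demand v p \<longrightarrow>
        (\<exists>T\<in>demand v p'. S \<inter> {j. p j = p' j} \<subseteq> T))"

definition decision_map :: "('a set \<Rightarrow> real) \<Rightarrow> (('a \<Rightarrow> real) \<Rightarrow> 'a set) \<Rightarrow> bool" where
  "decision_map v X \<longleftrightarrow> (\<forall>p. (\<forall>j. 0 \<le> p j) \<longrightarrow> X p \<in> demand v p)"

definition GS_consistent :: "(('a \<Rightarrow> real) \<Rightarrow> 'a set) \<Rightarrow> bool" where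
  "GS_consistent X \<longleftrightarrow>
     (\<forall>p p'. (\<forall>j. 0 \<le> p j) \<longrightarrow> p \<le> p' \<longrightarrow> X p \<inter> {j. p j = p' j} \<subseteq> X p')"

definition seller_utility :: "(('a \<Rightarrow> real) \<Rightarrow> 'a set) \<Rightarrow> 'a \<Rightarrow> ('a \<Rightarrow> real) \<Rightarrow> real" where
  "seller_utility X i p = (if i \<in> X p then p i else 0)"

text \<open>A mixed Nash equilibrium: independent price distributions M i on R_+ (the joint
  law is the product measure PiM UNIV M).  Measurability of the utility functions is
  required so that the expectations are well defined; expectations of the nonnegative
  utilities are taken as nonnegative (extended) Lebesgue integrals.\<close>

definition mixed_NE :: "(('a \<Rightarrow> real) \<Rightarrow> 'a set) \<Rightarrow> ('a \<Rightarrow> real measure) \<Rightarrow> bool" where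
  "mixed_NE X M \<longleftrightarrow>
     (\<forall>i. prob_space (M i) \<and> sets (M i) = sets borel \<and> (AE x in M i. 0 \<le> x)) \<and>
     (\<forall>i. (\<lambda>p. seller_utility X i p) \<in> borel_measurable (PiM UNIV M)) \<and>
     (\<forall>i x. 0 \<le> x \<longrightarrow> (\<lambda>p. seller_utility X i (p(i := x))) \<in> borel_measurable (PiM UNIV M)) \<and>
     (\<forall>i x. 0 \<le> x \<longrightarrow>
        (\<integral>\<^sup>+ p. ennreal (seller_utility X i (p(i := x))) \<partial>PiM UNIV M)
          \<le> (\<integral>\<^sup>+ p. ennreal (seller_utility X i p) \<partial>PiM UNIV M))"

end

theory Submission
  imports Defs
begin


lemma ps_nonneg: "(\<And>j. 0 \<le> p j) \<Longrightarrow> 0 \<le> price_sum p (S::'a::finite set)"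
  unfolding price_sum_def by (simp add: sum_nonneg)

lemma ps_ge_elem: "(\<And>j. 0 \<le> p j) \<Longrightarrow> j \<in> S \<Longrightarrow> p j \<le> price_sum p (S::'a::finite set)"
  unfolding price_sum_def by (rule member_le_sum) auto

lemma ps_upd_notin: "j \<notin> S \<Longrightarrow> price_sum (p(j:=y)) S = price_sum p S"
  unfolding price_sum_def by (rule sum.cong) auto

lemma ps_insert: "j \<notin> S \<Longrightarrow> price_sum p (insert j (S::'a::finite set)) = p j + price_sum p S"
  unfolding price_sum_def by simp

lemma ps_remove: "j \<in> S \<Longrightarrow> price_sum p (S::'a::finite set) = p j + price_sum p (S - {j})"
  unfolding price_sum_def by (simp add: sum.remove)

lemma val_mono: "valuation v \<Longrightarrow> S \<subseteq> T \<Longrightarrow> v S \<le> v T"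
  unfolding valuation_def by blast

lemma val_nonneg: "valuation v \<Longrightarrow> 0 \<le> v S"
  unfolding valuation_def by blast

lemma val_empty: "valuation v \<Longrightarrow> v {} = 0"
  unfolding valuation_def by blast

lemma demandD: "S \<in> demand v p \<Longrightarrow> v T - price_sum p T \<le> v S - price_sum p S"
  unfolding demand_def by blast

lemma demandI: "(\<And>T. v T - price_sum p T \<le> v S - price_sum p S) \<Longrightarrow> S \<in> demand v p"
  unfolding demand_def by blast

lemma gsD:
  assumes "gross_substitutes v" "\<And>j. 0 \<le> p j" "p \<le> p'" "S \<in> demand v p"
  shows "\<exists>T\<in>demand v p'. S \<inter> {j. p j = p' j} \<subseteq> T"
proof -
  have "\<forall>j. 0 \<le> p j" using assms(2) by simp
  thus ?thesis using assms(1,3,4) unfolding gross_substitutes_def by simp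
qed

lemma util_restrict:
  fixes v :: "'a::finite set \<Rightarrow> real"
  assumes val: "valuation v" and nn: "\<And>j. 0 \<le> p j" and T0: "\<And>j. j \<in> T \<Longrightarrow> p j = 0"
    and H: "\<And>j. j \<notin> T \<Longrightarrow> j \<notin> K \<Longrightarrow> p j > v UNIV" and disj: "T \<inter> K = {}"
  shows "v Z - price_sum p Z < 0 \<or> v Z - price_sum p Z \<le> v (T \<union> (Z \<inter> K)) - price_sum p (Z \<inter> K)"
proof (cases "Z \<subseteq> T \<union> K")
  case True
  have "price_sum p Z = price_sum p (Z \<inter> K) + price_sum p (Z \<inter> T)"
  proof -
    have "Z = (Z \<inter> K) \<union> (Z \<inter> T)" using True by blast
    moreover have "(Z \<inter> K) \<inter> (Z \<inter> T) = {}" using disj by blast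
    ultimately show ?thesis unfolding price_sum_def
      by (metis finite sum.union_disjoint finite_Int finite)
  qed
  moreover have "price_sum p (Z \<inter> T) = 0" unfolding price_sum_def using T0 by simp
  moreover have "Z \<subseteq> T \<union> (Z \<inter> K)" using True by blast
  hence "v Z \<le> v (T \<union> (Z \<inter> K))" by (rule val_mono[OF val])
  ultimately show ?thesis by linarith
next
  case False
  then obtain j where j: "j \<in> Z" "j \<notin> T" "j \<notin> K" by blast
  have "p j \<le> price_sum p Z" by (rule ps_ge_elem[OF nn j(1)])
  moreover have "v Z \<le> v UNIV" using val unfolding valuation_def by blast
  moreover have "v UNIV < p j" by (rule H[OF j(2,3)])
  ultimately show ?thesis by linarith
qed

lemma marg_decr:
  fixes v :: "'a::finite set \<Rightarrow> real"
  assumes val: "valuation v" and gs: "gross_substitutes v"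
    and XY: "X \<subseteq> Y" and e: "e \<notin> Y"
  shows "v (insert e Y) - v Y \<le> v (insert e X) - v X"
proof (rule ccontr)
  assume "\<not> ?thesis"
  hence lt: "v (insert e X) - v X < v (insert e Y) - v Y" by simp
  define \<alpha> where "\<alpha> = ((v (insert e X) - v X) + (v (insert e Y) - v Y)) / 2"
  have a1: "v (insert e X) - v X < \<alpha>" and a2: "\<alpha> < v (insert e Y) - v Y"
    using lt unfolding \<alpha>_def by auto
  have "v X \<le> v (insert e X)" by (rule val_mono[OF val]) blast
  hence a0: "0 \<le> \<alpha>" using a1 by auto
  define H where "H = v UNIV + 1"
  define p where "p = (\<lambda>j. if j \<in> Y then 0 else if j = e then \<alpha> else H)"
  define p' where "p' = (\<lambda>j. if j \<in> X then 0 else if j = e then \<alpha> else H)"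
  have H0: "0 \<le> H" unfolding H_def using val_nonneg[OF val, of UNIV] by simp
  have pnn: "\<And>j. 0 \<le> p j" unfolding p_def using a0 H0 by auto
  have p'nn: "\<And>j. 0 \<le> p' j" unfolding p'_def using a0 H0 by auto
  have le: "p \<le> p'" unfolding le_fun_def p_def p'_def using XY e H0 by auto
  have dem: "insert e Y \<in> demand v p"
  proof (rule demandI)
    fix Z
    have ps1: "price_sum p {e} = \<alpha>" unfolding price_sum_def p_def using e by simp
    have r: "v Z - price_sum p Z < 0 \<or> v Z - price_sum p Z \<le> v (Y \<union> (Z \<inter> {e})) - price_sum p (Z \<inter> {e})"
      by (rule util_restrict[OF val pnn]) (auto simp: p_def H_def e)
    have pY: "price_sum p (insert e Y) = \<alpha>"
      using ps_insert[OF e, of p] unfolding price_sum_def p_def using e by simp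
    have base: "0 \<le> v (insert e Y) - \<alpha>" using a2 val_nonneg[OF val, of Y] by simp
    show "v Z - price_sum p Z \<le> v (insert e Y) - price_sum p (insert e Y)"
    proof (cases "e \<in> Z")
      case True
      hence "Z \<inter> {e} = {e}" by auto
      moreover have "Y \<union> {e} = insert e Y" by blast
      ultimately show ?thesis using r pY ps1 base by auto
    next
      case False
      hence "Z \<inter> {e} = {}" by auto
      thus ?thesis using r pY base a2 by (auto simp: price_sum_def)
    qed
  qed
  obtain Z where Z: "Z \<in> demand v p'" "insert e Y \<inter> {j. p j = p' j} \<subseteq> Z"
    using gsD[OF gs pnn le dem] by blast
  have eX: "e \<notin> X" using e XY by blast
  have pe: "p e = p' e" unfolding p_def p'_def using e eX by simp
  have pX: "\<And>x. x \<in> X \<Longrightarrow> p x = p' x" unfolding p_def p'_def using XY eX by auto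
  have "e \<in> insert e Y \<inter> {j. p j = p' j}" using pe by simp
  moreover have "X \<subseteq> insert e Y \<inter> {j. p j = p' j}" using pX XY by blast
  ultimately have XeZ: "insert e X \<subseteq> Z" using Z(2) by blast
  have cmp: "v X - price_sum p' X \<le> v Z - price_sum p' Z" using demandD[OF Z(1)] .
  have psX: "price_sum p' X = 0" unfolding price_sum_def p'_def by simp
  have r: "v Z - price_sum p' Z < 0 \<or> v Z - price_sum p' Z \<le> v (X \<union> (Z \<inter> {e})) - price_sum p' (Z \<inter> {e})"
    by (rule util_restrict[OF val p'nn]) (auto simp: p'_def H_def eX)
  have "Z \<inter> {e} = {e}" using XeZ by auto
  moreover have "price_sum p' {e} = \<alpha>" unfolding price_sum_def p'_def using eX by simp
  ultimately show False using r cmp psX a1 val_nonneg[OF val, of X] by auto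
qed

lemma ps3:
  assumes "a \<noteq> b" "a \<noteq> c" "b \<noteq> c"
  shows "price_sum p ((Z::'a::finite set) \<inter> {a,b,c}) = (if a \<in> Z then p a else 0) + (if b \<in> Z then p b else 0) + (if c \<in> Z then p c else 0)"
proof -
  have "price_sum p (Z \<inter> {a,b,c}) = price_sum p ({a,b,c} \<inter> Z)" by (simp add: Int_commute)
  also have "\<dots> = (\<Sum>j\<in>{a,b,c}. if j \<in> Z then p j else 0)"
    unfolding price_sum_def by (rule sum.inter_restrict) simp
  also have "\<dots> = (if a \<in> Z then p a else 0) + (if b \<in> Z then p b else 0) + (if c \<in> Z then p c else 0)"
    using assms by simp
  finally show ?thesis .
qed

lemma rgp:
  fixes v :: "'a::finite set \<Rightarrow> real"
  assumes val: "valuation v" and gs: "gross_substitutes v"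
    and ab: "a \<noteq> b" and ac: "a \<noteq> c" and bc: "b \<noteq> c"
    and aT: "a \<notin> T" and bT: "b \<notin> T" and cT: "c \<notin> T"
  shows "v (insert a (insert b T)) + v (insert c T) \<le>
     max (v (insert a (insert c T)) + v (insert b T)) (v (insert b (insert c T)) + v (insert a T))"
proof (rule ccontr)
  assume neg: "\<not> ?thesis"
  define W0 where "W0 = v T"
  define Wa where "Wa = v (insert a T)"
  define Wb where "Wb = v (insert b T)"
  define Wc where "Wc = v (insert c T)"
  define Wab where "Wab = v (insert a (insert b T))"
  define Wac where "Wac = v (insert a (insert c T))"
  define Wbc where "Wbc = v (insert b (insert c T))"
  define Wabc where "Wabc = v (insert a (insert b (insert c T)))"
  have H1: "Wb + Wac < Wc + Wab" and H2: "Wa + Wbc < Wc + Wab"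
    using neg unfolding Wb_def Wac_def Wc_def Wab_def Wa_def Wbc_def by auto
  have S1: "Wabc - Wab \<le> Wac - Wa"
  proof -
    have "v (insert c (insert a (insert b T))) - v (insert a (insert b T)) \<le> v (insert c (insert a T)) - v (insert a T)"
      by (rule marg_decr[OF val gs]) (use ac bc cT in auto)
    moreover have "insert c (insert a (insert b T)) = insert a (insert b (insert c T))" by auto
    moreover have "insert c (insert a T) = insert a (insert c T)" by auto
    ultimately show ?thesis unfolding Wabc_def Wab_def Wac_def Wa_def by simp
  qed
  have S2: "Wabc - Wab \<le> Wbc - Wb"
  proof -
    have "v (insert c (insert a (insert b T))) - v (insert a (insert b T)) \<le> v (insert c (insert b T)) - v (insert b T)"
      by (rule marg_decr[OF val gs]) (use ac bc cT in auto)
    moreover have "insert c (insert a (insert b T)) = insert a (insert b (insert c T))" by auto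
    moreover have "insert c (insert b T) = insert b (insert c T)" by auto
    ultimately show ?thesis unfolding Wabc_def Wab_def Wbc_def Wb_def by simp
  qed
  have S3: "Wac - Wc \<le> Wa - W0"
  proof -
    have "v (insert a (insert c T)) - v (insert c T) \<le> v (insert a T) - v T"
      by (rule marg_decr[OF val gs]) (use ac aT in auto)
    thus ?thesis unfolding Wac_def Wc_def Wa_def W0_def .
  qed
  have S4: "Wab - Wa \<le> Wb - W0"
  proof -
    have "v (insert b (insert a T)) - v (insert a T) \<le> v (insert b T) - v T"
      by (rule marg_decr[OF val gs]) (use ab bT in auto)
    moreover have "insert b (insert a T) = insert a (insert b T)" by auto
    ultimately show ?thesis unfolding Wab_def Wa_def Wb_def W0_def by simp
  qed
  have M1: "W0 \<le> Wc" unfolding W0_def Wc_def by (rule val_mono[OF val]) auto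
  have M2: "Wb \<le> Wab" unfolding Wb_def Wab_def by (rule val_mono[OF val]) auto
  have M3: "Wa \<le> Wab" unfolding Wa_def Wab_def by (rule val_mono[OF val]) auto
  have M4: "Wac \<le> Wabc" unfolding Wac_def Wabc_def by (rule val_mono[OF val]) auto
  have M5: "Wbc \<le> Wabc" unfolding Wbc_def Wabc_def by (rule val_mono[OF val]) auto
  have M6: "0 \<le> W0" unfolding W0_def by (rule val_nonneg[OF val])
  have M7: "Wc \<le> Wac" unfolding Wac_def Wc_def by (rule val_mono[OF val]) auto
  have M8: "Wc \<le> Wbc" unfolding Wbc_def Wc_def by (rule val_mono[OF val]) auto
  have H3: "Wabc + W0 < Wc + Wab"
  proof (rule ccontr)
    assume "\<not> ?thesis"
    hence "Wc - W0 \<le> Wac - Wa" using S1 by linarith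
    hence "Wac = Wc + Wa - W0" using S3 by linarith
    thus False using H1 S4 by linarith
  qed
  define L where "L = max (Wabc - Wab) (Wbc + Wac - Wc - Wab)"
  define R where "R = min (Wc - W0) (Wc + Wab - Wb - Wa)"
  have LR: "L < R" unfolding L_def R_def max_less_iff_conj min_less_iff_conj
    using H1 H2 H3 S2 S4 M1 M2 M3 by (intro conjI) linarith+
  define x where "x = (L + R) / 2"
  have x1: "Wabc - Wab < x" and x2: "Wbc + Wac - Wc - Wab < x"
    and x3: "x < Wc - W0" and x4: "x < Wc + Wab - Wb - Wa"
    using LR unfolding x_def L_def R_def by auto
  define s where "s = Wab - Wc + x"
  define Lb where "Lb = max (Wb - Wc + x) (Wbc - Wc)"
  define La where "La = max (Wa - Wc + x) (Wac - Wc)"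
  have Lsum: "max Lb 0 + max La 0 < s"
  proof -
    have "Lb + La < s" unfolding Lb_def La_def s_def using x1 x2 x3 x4 H1 H2
      by (simp add: max_def; linarith?)
    moreover have "Lb < s" unfolding Lb_def s_def using x1 x2 H1 M4 M5 M7 by (simp add: max_def; linarith?)
    moreover have "La < s" unfolding La_def s_def using x1 x2 H2 M4 M5 M8 by (simp add: max_def; linarith?)
    moreover have "0 < s" unfolding s_def using x1 M4 M7 by linarith
    ultimately show ?thesis by (simp add: max_def)
  qed
  define \<beta>b where "\<beta>b = (max Lb 0 + (s - max La 0)) / 2"
  define \<beta>a where "\<beta>a = s - \<beta>b"
  have mb: "Lb \<le> max Lb 0" "0 \<le> max Lb 0" and ma: "La \<le> max La 0" "0 \<le> max La 0" by auto
  have Lb1: "Wb - Wc + x \<le> Lb" and Lb2: "Wbc - Wc \<le> Lb" unfolding Lb_def by auto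
  have La1: "Wa - Wc + x \<le> La" and La2: "Wac - Wc \<le> La" unfolding La_def by auto
  have bb: "max Lb 0 < \<beta>b" unfolding \<beta>b_def using Lsum by (simp add: field_simps)
  have ba: "max La 0 < \<beta>a" unfolding \<beta>a_def \<beta>b_def using Lsum by (simp add: field_simps)
  have fb1: "Wb - Wc + x < \<beta>b" and fb2: "Wbc - Wc < \<beta>b" and fb3: "0 < \<beta>b"
    using bb mb Lb1 Lb2 by linarith+
  have fa1: "Wa - Wc + x < \<beta>a" and fa2: "Wac - Wc < \<beta>a" and fa3: "0 < \<beta>a"
    using ba ma La1 La2 by linarith+
  have sab: "\<beta>a + \<beta>b = s" unfolding \<beta>a_def by simp
  define U where "U = Wc - x"
  have U0: "0 \<le> U" unfolding U_def using x3 M6 by linarith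
  have fx: "W0 \<le> U" "Wc - x = U" "Wa - \<beta>a \<le> U" "Wb - \<beta>b < U" "Wab - \<beta>a - \<beta>b = U"
     "Wac - \<beta>a - x \<le> U" "Wbc - \<beta>b - x < U" "Wabc - \<beta>a - \<beta>b - x \<le> U"
    unfolding U_def using x1 x3 fb1 fb2 fa1 fa2 sab unfolding s_def by linarith+
  define H where "H = v UNIV + 1"
  have H0: "0 \<le> H" unfolding H_def using val_nonneg[OF val, of UNIV] by simp
  define p where "p = (\<lambda>j. if j \<in> T then 0 else if j = a then \<beta>a else if j = b then \<beta>b else if j = c then x else H)"
  have M9: "Wab \<le> Wabc" unfolding Wab_def Wabc_def by (rule val_mono[OF val]) auto
  have xpos: "0 \<le> x" using x1 M9 by linarith
  have pnn: "\<And>j. 0 \<le> p j" unfolding p_def using fa3 fb3 xpos H0 by auto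
  have pa: "p a = \<beta>a" and pb: "p b = \<beta>b" and pc: "p c = x" unfolding p_def using aT bT cT ab ac bc by auto
  have dem: "insert a (insert b T) \<in> demand v p"
  proof (rule demandI)
    fix Z
    have r: "v Z - price_sum p Z < 0 \<or> v Z - price_sum p Z \<le> v (T \<union> (Z \<inter> {a,b,c})) - price_sum p (Z \<inter> {a,b,c})"
      by (rule util_restrict[OF val pnn]) (auto simp: p_def H_def aT bT cT)
    have ps: "price_sum p (Z \<inter> {a,b,c}) = (if a \<in> Z then \<beta>a else 0) + (if b \<in> Z then \<beta>b else 0) + (if c \<in> Z then x else 0)"
      using ps3[OF ab ac bc, of p Z] pa pb pc by simp
    have psD: "price_sum p (insert a (insert b T)) = \<beta>a + \<beta>b"
    proof -
      have "price_sum p (insert a (insert b T)) = p a + (p b + price_sum p T)"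
        using ps_insert[of a "insert b T" p] ps_insert[of b T p] ab aT bT by simp
      moreover have "price_sum p T = 0" unfolding price_sum_def p_def by simp
      ultimately show ?thesis using pa pb by simp
    qed
    moreover { assume cs: "a \<in> Z" "b \<in> Z" "c \<in> Z"
      hence "T \<union> (Z \<inter> {a,b,c}) = insert a (insert b (insert c (T)))" by auto
      hence e1: "v (T \<union> (Z \<inter> {a,b,c})) = Wabc" by (simp add: Wabc_def)
      have e2: "price_sum p (Z \<inter> {a,b,c}) = \<beta>a + \<beta>b + x" using ps cs by simp
      have "v (T \<union> (Z \<inter> {a,b,c})) - price_sum p (Z \<inter> {a,b,c}) \<le> U" using e1 e2 fx by linarith }
    moreover { assume cs: "a \<in> Z" "b \<in> Z" "\<not> c \<in> Z"
      hence "T \<union> (Z \<inter> {a,b,c}) = insert a (insert b (T))" by auto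
      hence e1: "v (T \<union> (Z \<inter> {a,b,c})) = Wab" by (simp add: Wab_def)
      have e2: "price_sum p (Z \<inter> {a,b,c}) = \<beta>a + \<beta>b" using ps cs by simp
      have "v (T \<union> (Z \<inter> {a,b,c})) - price_sum p (Z \<inter> {a,b,c}) \<le> U" using e1 e2 fx by linarith }
    moreover { assume cs: "a \<in> Z" "\<not> b \<in> Z" "c \<in> Z"
      hence "T \<union> (Z \<inter> {a,b,c}) = insert a (insert c (T))" by auto
      hence e1: "v (T \<union> (Z \<inter> {a,b,c})) = Wac" by (simp add: Wac_def)
      have e2: "price_sum p (Z \<inter> {a,b,c}) = \<beta>a + x" using ps cs by simp
      have "v (T \<union> (Z \<inter> {a,b,c})) - price_sum p (Z \<inter> {a,b,c}) \<le> U" using e1 e2 fx by linarith }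
    moreover { assume cs: "a \<in> Z" "\<not> b \<in> Z" "\<not> c \<in> Z"
      hence "T \<union> (Z \<inter> {a,b,c}) = insert a (T)" by auto
      hence e1: "v (T \<union> (Z \<inter> {a,b,c})) = Wa" by (simp add: Wa_def)
      have e2: "price_sum p (Z \<inter> {a,b,c}) = \<beta>a" using ps cs by simp
      have "v (T \<union> (Z \<inter> {a,b,c})) - price_sum p (Z \<inter> {a,b,c}) \<le> U" using e1 e2 fx by linarith }
    moreover { assume cs: "\<not> a \<in> Z" "b \<in> Z" "c \<in> Z"
      hence "T \<union> (Z \<inter> {a,b,c}) = insert b (insert c (T))" by auto
      hence e1: "v (T \<union> (Z \<inter> {a,b,c})) = Wbc" by (simp add: Wbc_def)
      have e2: "price_sum p (Z \<inter> {a,b,c}) = \<beta>b + x" using ps cs by simp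
      have "v (T \<union> (Z \<inter> {a,b,c})) - price_sum p (Z \<inter> {a,b,c}) \<le> U" using e1 e2 fx by linarith }
    moreover { assume cs: "\<not> a \<in> Z" "b \<in> Z" "\<not> c \<in> Z"
      hence "T \<union> (Z \<inter> {a,b,c}) = insert b (T)" by auto
      hence e1: "v (T \<union> (Z \<inter> {a,b,c})) = Wb" by (simp add: Wb_def)
      have e2: "price_sum p (Z \<inter> {a,b,c}) = \<beta>b" using ps cs by simp
      have "v (T \<union> (Z \<inter> {a,b,c})) - price_sum p (Z \<inter> {a,b,c}) \<le> U" using e1 e2 fx by linarith }
    moreover { assume cs: "\<not> a \<in> Z" "\<not> b \<in> Z" "c \<in> Z"
      hence "T \<union> (Z \<inter> {a,b,c}) = insert c (T)" by auto
      hence e1: "v (T \<union> (Z \<inter> {a,b,c})) = Wc" by (simp add: Wc_def)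
      have e2: "price_sum p (Z \<inter> {a,b,c}) = x" using ps cs by simp
      have "v (T \<union> (Z \<inter> {a,b,c})) - price_sum p (Z \<inter> {a,b,c}) \<le> U" using e1 e2 fx by linarith }
    moreover { assume cs: "\<not> a \<in> Z" "\<not> b \<in> Z" "\<not> c \<in> Z"
      hence "T \<union> (Z \<inter> {a,b,c}) = T" by auto
      hence e1: "v (T \<union> (Z \<inter> {a,b,c})) = W0" by (simp add: W0_def)
      have e2: "price_sum p (Z \<inter> {a,b,c}) = 0" using ps cs by simp
      have "v (T \<union> (Z \<inter> {a,b,c})) - price_sum p (Z \<inter> {a,b,c}) \<le> U" using e1 e2 fx by linarith }

    ultimately have key: "v (T \<union> (Z \<inter> {a,b,c})) - price_sum p (Z \<inter> {a,b,c}) \<le> U" by blast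
    show "v Z - price_sum p Z \<le> v (insert a (insert b T)) - price_sum p (insert a (insert b T))"
      using r key U0 psD fx(5) unfolding Wab_def by linarith
  qed
  define p' where "p' = p(a := \<beta>a + 1)"
  have le: "p \<le> p'" unfolding p'_def le_fun_def using pa by simp
  have p'nn: "\<And>j. 0 \<le> p' j" unfolding p'_def using pnn fa3 by simp
  obtain Z where Z: "Z \<in> demand v p'" "insert a (insert b T) \<inter> {j. p j = p' j} \<subseteq> Z"
    using gsD[OF gs pnn le dem] by blast
  have "b \<in> insert a (insert b T) \<inter> {j. p j = p' j}" unfolding p'_def using ab by simp
  hence bZ: "b \<in> Z" using Z(2) by blast
  have cmp: "v (insert c T) - price_sum p' (insert c T) \<le> v Z - price_sum p' Z" using demandD[OF Z(1)] .
  have psc: "price_sum p' (insert c T) = x"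
  proof -
    have "price_sum p' (insert c T) = p' c + price_sum p' T" using ps_insert[of c T p'] cT by simp
    moreover have "price_sum p' T = 0" unfolding price_sum_def p'_def p_def using aT by (intro sum.neutral) auto
    ultimately show ?thesis unfolding p'_def using pc ac by simp
  qed
  have r: "v Z - price_sum p' Z < 0 \<or> v Z - price_sum p' Z \<le> v (T \<union> (Z \<inter> {a,b,c})) - price_sum p' (Z \<inter> {a,b,c})"
    by (rule util_restrict[OF val p'nn]) (auto simp: p'_def p_def H_def aT bT cT)
  have ps: "price_sum p' (Z \<inter> {a,b,c}) = (if a \<in> Z then \<beta>a + 1 else 0) + (if b \<in> Z then \<beta>b else 0) + (if c \<in> Z then x else 0)"
    using ps3[OF ab ac bc, of p' Z] pa pb pc ab ac unfolding p'_def by simp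
    moreover { assume cs: "a \<in> Z" "b \<in> Z" "c \<in> Z"
      hence "T \<union> (Z \<inter> {a,b,c}) = insert a (insert b (insert c (T)))" by auto
      hence e1: "v (T \<union> (Z \<inter> {a,b,c})) = Wabc" by (simp add: Wabc_def)
      have e2: "price_sum p' (Z \<inter> {a,b,c}) = \<beta>a + 1 + \<beta>b + x" using ps cs by simp
      have "v (T \<union> (Z \<inter> {a,b,c})) - price_sum p' (Z \<inter> {a,b,c}) < U" using e1 e2 fx by linarith }
    moreover { assume cs: "a \<in> Z" "b \<in> Z" "\<not> c \<in> Z"
      hence "T \<union> (Z \<inter> {a,b,c}) = insert a (insert b (T))" by auto
      hence e1: "v (T \<union> (Z \<inter> {a,b,c})) = Wab" by (simp add: Wab_def)
      have e2: "price_sum p' (Z \<inter> {a,b,c}) = \<beta>a + 1 + \<beta>b" using ps cs by simp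
      have "v (T \<union> (Z \<inter> {a,b,c})) - price_sum p' (Z \<inter> {a,b,c}) < U" using e1 e2 fx by linarith }
    moreover { assume cs: "\<not> a \<in> Z" "b \<in> Z" "c \<in> Z"
      hence "T \<union> (Z \<inter> {a,b,c}) = insert b (insert c (T))" by auto
      hence e1: "v (T \<union> (Z \<inter> {a,b,c})) = Wbc" by (simp add: Wbc_def)
      have e2: "price_sum p' (Z \<inter> {a,b,c}) = \<beta>b + x" using ps cs by simp
      have "v (T \<union> (Z \<inter> {a,b,c})) - price_sum p' (Z \<inter> {a,b,c}) < U" using e1 e2 fx by linarith }
    moreover { assume cs: "\<not> a \<in> Z" "b \<in> Z" "\<not> c \<in> Z"
      hence "T \<union> (Z \<inter> {a,b,c}) = insert b (T)" by auto
      hence e1: "v (T \<union> (Z \<inter> {a,b,c})) = Wb" by (simp add: Wb_def)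
      have e2: "price_sum p' (Z \<inter> {a,b,c}) = \<beta>b" using ps cs by simp
      have "v (T \<union> (Z \<inter> {a,b,c})) - price_sum p' (Z \<inter> {a,b,c}) < U" using e1 e2 fx by linarith }

  ultimately have key: "v (T \<union> (Z \<inter> {a,b,c})) - price_sum p' (Z \<inter> {a,b,c}) < U" using bZ by blast
  show False using r key U0 cmp psc fx(2) unfolding Wc_def by linarith
qed

lemma exch_aux:
  fixes v :: "'a::finite set \<Rightarrow> real"
  assumes val: "valuation v" and gs: "gross_substitutes v"
  shows "A \<subseteq> U \<Longrightarrow> i \<in> U \<Longrightarrow> i \<notin> A \<Longrightarrow>
    v (insert i A) + v (U - {i}) \<le> v A + v U \<or>
    (\<exists>y \<in> U - A - {i}. v (insert i A) + v (U - {i}) \<le> v (insert y A) + v (U - {y}))"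
proof (induction "card (U - A)" arbitrary: U rule: less_induct)
  case less
  note AU = less.prems(1) and iU = less.prems(2) and iA = less.prems(3)
  define B where "B = U - A - {i}"
  show ?case
  proof (cases "B = {}")
    case True
    hence "U = insert i A" using AU iU unfolding B_def by blast
    hence "U - {i} = A" using iA by blast
    thus ?thesis using \<open>U = insert i A\<close> by simp
  next
    case False
    define \<psi> where "\<psi> = (\<lambda>y. v (insert y A) + v (U - {i} - {y}))"
    have finB: "finite B" by simp
    define m where "m = Max (\<psi> ` B)"
    have "m \<in> \<psi> ` B" unfolding m_def using finB False by (intro Max_in) auto
    then obtain y0 where y0B: "y0 \<in> B" and my0: "m = \<psi> y0" by blast
    have psimax: "\<And>y. y \<in> B \<Longrightarrow> \<psi> y \<le> \<psi> y0" using my0 finB unfolding m_def by (metis Max_ge finite_imageI imageI)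
    have y0U: "y0 \<in> U" and y0A: "y0 \<notin> A" and y0i: "y0 \<noteq> i" using y0B unfolding B_def by auto
    define U' where "U' = U - {y0}"
    have lt: "card (U' - A) < card (U - A)"
    proof -
      have "U' - A \<subset> U - A" unfolding U'_def using y0U y0A by blast
      thus ?thesis by (simp add: psubset_card_mono)
    qed
    have IH: "v (insert i A) + v (U' - {i}) \<le> v A + v U' \<or>
      (\<exists>y \<in> U' - A - {i}. v (insert i A) + v (U' - {i}) \<le> v (insert y A) + v (U' - {y}))"
      using less.hyps[OF lt] AU iU iA y0A y0i unfolding U'_def by blast
    have e1: "U' - {i} = U - {i} - {y0}" unfolding U'_def by blast
    show ?thesis
    proof (cases "v (insert i A) + v (U' - {i}) \<le> v A + v U'")
      case True
      have md: "v (insert y0 (U - {i} - {y0})) - v (U - {i} - {y0}) \<le> v (insert y0 A) - v A"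
        by (rule marg_decr[OF val gs]) (use AU iA y0A in auto)
      have "insert y0 (U - {i} - {y0}) = U - {i}" using y0U y0i by blast
      hence "v (insert i A) + v (U - {i}) \<le> v (insert y0 A) + v (U - {y0})"
        using True md e1 unfolding U'_def by simp
      thus ?thesis using y0B unfolding B_def by blast
    next
      case False
      then obtain y1 where y1: "y1 \<in> U' - A - {i}"
        and h1: "v (insert i A) + v (U' - {i}) \<le> v (insert y1 A) + v (U' - {y1})" using IH by blast
      have y1U: "y1 \<in> U" and y1A: "y1 \<notin> A" and y1i: "y1 \<noteq> i" and y10: "y1 \<noteq> y0"
        using y1 unfolding U'_def by auto
      have y1B: "y1 \<in> B" unfolding B_def using y1U y1A y1i by blast
      define T where "T = U - {i, y0, y1}"
      have r: "v (insert y0 (insert y1 T)) + v (insert i T) \<le>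
        max (v (insert y0 (insert i T)) + v (insert y1 T)) (v (insert y1 (insert i T)) + v (insert y0 T))"
        by (rule rgp[OF val gs]) (use y10 y0i y1i in \<open>auto simp: T_def\<close>)
      have s1: "insert y0 (insert y1 T) = U - {i}" unfolding T_def using iU y0U y1U y0i y1i y10 by blast
      have s2: "insert i T = U - {y0} - {y1}" unfolding T_def using iU y0U y1U y0i y1i y10 by blast
      have s3: "insert y0 (insert i T) = U - {y1}" unfolding T_def using iU y0U y1U y0i y1i y10 by blast
      have s4: "insert y1 T = U - {i} - {y0}" unfolding T_def using iU y0U y1U y0i y1i y10 by blast
      have s5: "insert y1 (insert i T) = U - {y0}" unfolding T_def using iU y0U y1U y0i y1i y10 by blast
      have s6: "insert y0 T = U - {i} - {y1}" unfolding T_def using iU y0U y1U y0i y1i y10 by blast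
      have e2: "U' - {y1} = U - {y0} - {y1}" unfolding U'_def by blast
      have r': "v (U - {i}) + v (U - {y0} - {y1}) \<le>
        max (v (U - {y1}) + v (U - {i} - {y0})) (v (U - {y0}) + v (U - {i} - {y1}))"
        using r unfolding s1 s3 s5 unfolding s2 s4 s6 .
      have h1': "v (insert i A) + v (U - {i} - {y0}) \<le> v (insert y1 A) + v (U - {y0} - {y1})"
        using h1 unfolding e1 e2 .
      have ps: "v (insert y1 A) + v (U - {i} - {y1}) \<le> v (insert y0 A) + v (U - {i} - {y0})"
        using psimax[OF y1B] unfolding \<psi>_def .
      show ?thesis
      proof (cases "v (U - {y1}) + v (U - {i} - {y0}) \<ge> v (U - {y0}) + v (U - {i} - {y1})")
        case True
        hence "v (U - {i}) + v (U - {y0} - {y1}) \<le> v (U - {y1}) + v (U - {i} - {y0})"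
          using r' by (simp add: max_def)
        hence "v (insert i A) + v (U - {i}) \<le> v (insert y1 A) + v (U - {y1})" using h1' by linarith
        thus ?thesis using y1B unfolding B_def by blast
      next
        case False
        hence "v (U - {i}) + v (U - {y0} - {y1}) \<le> v (U - {y0}) + v (U - {i} - {y1})"
          using r' by (simp add: max_def)
        hence "v (insert i A) + v (U - {i}) \<le> v (insert y0 A) + v (U - {y0})" using h1' ps by linarith
        thus ?thesis using y0B unfolding B_def by blast
      qed
    qed
  qed
qed

lemma marg_eq: "marginal v {i} (UNIV - {i}) = v UNIV - v (UNIV - {i})"
  unfolding marginal_def by (simp add: insert_absorb)

lemma swap_witness:
  fixes v :: "'a::finite set \<Rightarrow> real"
  assumes val: "valuation v" and gs: "gross_substitutes v"
    and S: "S \<in> demand v p" and iS: "i \<in> S" and pi: "p i > v UNIV - v (UNIV - {i})"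
  shows "\<exists>j. j \<notin> S \<and> (\<forall>y. y < (v UNIV - v (UNIV - {j})) + (p i - (v UNIV - v (UNIV - {i}))) \<longrightarrow>
              (\<forall>T \<in> demand v (p(j:=y)). j \<in> T))"
proof -
  have ex: "v (insert i (S - {i})) + v (UNIV - {i}) \<le> v (S - {i}) + v UNIV \<or>
    (\<exists>y \<in> UNIV - (S - {i}) - {i}. v (insert i (S - {i})) + v (UNIV - {i}) \<le> v (insert y (S - {i})) + v (UNIV - {y}))"
    by (rule exch_aux[OF val gs]) auto
  have iSi: "insert i (S - {i}) = S" using iS by blast
  have psS: "price_sum p S = p i + price_sum p (S - {i})" using ps_remove[OF iS] .
  have dS: "v (S - {i}) - price_sum p (S - {i}) \<le> v S - price_sum p S" by (rule demandD[OF S])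
  have "\<not> (v S + v (UNIV - {i}) \<le> v (S - {i}) + v UNIV)" using psS dS pi by linarith
  then obtain j where jS: "j \<notin> S" and hj: "v S + v (UNIV - {i}) \<le> v (insert j (S - {i})) + v (UNIV - {j})"
    using ex unfolding iSi by auto
  have "\<forall>y. y < (v UNIV - v (UNIV - {j})) + (p i - (v UNIV - v (UNIV - {i}))) \<longrightarrow>
              (\<forall>T \<in> demand v (p(j:=y)). j \<in> T)"
  proof (intro allI impI ballI, rule ccontr)
    fix y T assume y: "y < (v UNIV - v (UNIV - {j})) + (p i - (v UNIV - v (UNIV - {i})))"
      and T: "T \<in> demand v (p(j:=y))" and jT: "j \<notin> T"
    have uT: "v T - price_sum (p(j:=y)) T = v T - price_sum p T" using ps_upd_notin[OF jT] by simp
    have dT: "v T - price_sum p T \<le> v S - price_sum p S" by (rule demandD[OF S])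
    have jSi: "j \<notin> S - {i}" using jS by blast
    have ps': "price_sum (p(j:=y)) (insert j (S - {i})) = y + price_sum p (S - {i})"
      using ps_insert[OF jSi, of "p(j:=y)"] ps_upd_notin[OF jSi, of p y] by simp
    have d2: "v (insert j (S - {i})) - price_sum (p(j:=y)) (insert j (S - {i})) \<le> v T - price_sum (p(j:=y)) T"
      by (rule demandD[OF T])
    show False using uT dT ps' d2 hj y psS by linarith
  qed
  thus ?thesis using jS by blast
qed

lemma decD: "decision_map v X \<Longrightarrow> (\<And>j. 0 \<le> p j) \<Longrightarrow> X p \<in> demand v p"
  unfolding decision_map_def by blast

lemma consD: "GS_consistent X \<Longrightarrow> (\<And>j. 0 \<le> p j) \<Longrightarrow> p \<le> p' \<Longrightarrow> X p \<inter> {j. p j = p' j} \<subseteq> X p'"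
  unfolding GS_consistent_def by blast

lemma sold_below:
  fixes v :: "'a::finite set \<Rightarrow> real"
  assumes val: "valuation v" and dm: "decision_map v X" and gc: "GS_consistent X"
    and nn: "\<And>j. 0 \<le> p j" and lt: "p i < v UNIV - v (UNIV - {i})"
  shows "i \<in> X p"
proof -
  define q where "q = (\<lambda>j. if j = i then p i else 0)"
  have qnn: "\<And>j. 0 \<le> q j" unfolding q_def using nn by simp
  have qp: "q \<le> p" unfolding q_def le_fun_def using nn by simp
  have dq: "X q \<in> demand v q" by (rule decD[OF dm qnn])
  have "i \<in> X q"
  proof (rule ccontr)
    assume niq: "i \<notin> X q"
    have qz: "\<And>j. j \<noteq> i \<Longrightarrow> q j = 0" by (simp add: q_def)
    have "price_sum q (X q) = 0" unfolding price_sum_def using niq qz by (metis sum.neutral)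
    moreover have "v (X q) \<le> v (UNIV - {i})" by (rule val_mono[OF val]) (use niq in blast)
    moreover have "price_sum q UNIV = p i"
    proof -
      have "price_sum q UNIV = q i + price_sum q (UNIV - {i})" by (rule ps_remove) simp
      moreover have "price_sum q (UNIV - {i}) = 0" unfolding price_sum_def q_def by (intro sum.neutral) auto
      ultimately show ?thesis unfolding q_def by simp
    qed
    moreover have "v UNIV - price_sum q UNIV \<le> v (X q) - price_sum q (X q)" by (rule demandD[OF dq])
    ultimately show False using lt by linarith
  qed
  moreover have "i \<in> {j. q j = p j}" unfolding q_def by simp
  ultimately show ?thesis using consD[OF gc qnn qp] by blast
qed

lemma sold_mono:
  fixes v :: "'a::finite set \<Rightarrow> real"
  assumes dm: "decision_map v X" and nn: "\<And>j. 0 \<le> p j" and iX: "i \<in> X p"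
    and y0: "0 \<le> y" and yl: "y < p i"
  shows "i \<in> X (p(i:=y))"
proof (rule ccontr)
  assume ni: "i \<notin> X (p(i:=y))"
  have nn': "\<And>j. 0 \<le> (p(i:=y)) j" using nn y0 by simp
  have d1: "X p \<in> demand v p" by (rule decD[OF dm nn])
  have d2: "X (p(i:=y)) \<in> demand v (p(i:=y))" by (rule decD[OF dm nn'])
  have a: "v (X (p(i:=y))) - price_sum p (X (p(i:=y))) \<le> v (X p) - price_sum p (X p)" by (rule demandD[OF d1])
  have b: "v (X p) - price_sum (p(i:=y)) (X p) \<le> v (X (p(i:=y))) - price_sum (p(i:=y)) (X (p(i:=y)))" by (rule demandD[OF d2])
  have c: "price_sum (p(i:=y)) (X (p(i:=y))) = price_sum p (X (p(i:=y)))" by (rule ps_upd_notin[OF ni])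
  have e1: "price_sum p (X p) = p i + price_sum p (X p - {i})" by (rule ps_remove[OF iX])
  have e2: "price_sum (p(i:=y)) (X p) = y + price_sum p (X p - {i})"
    using ps_remove[OF iX, of "p(i:=y)"] ps_upd_notin[of i "X p - {i}" p y] by simp
  show False using a b c e1 e2 yl by linarith
qed

lemma sold_le:
  fixes v :: "'a::finite set \<Rightarrow> real"
  assumes val: "valuation v" and dm: "decision_map v X" and nn: "\<And>j. 0 \<le> p j" and iX: "i \<in> X p"
  shows "p i \<le> v UNIV"
proof -
  have d1: "X p \<in> demand v p" by (rule decD[OF dm nn])
  have a: "v (X p - {i}) - price_sum p (X p - {i}) \<le> v (X p) - price_sum p (X p)" by (rule demandD[OF d1])
  have e1: "price_sum p (X p) = p i + price_sum p (X p - {i})" by (rule ps_remove[OF iX])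
  have "v (X p) \<le> v UNIV" by (rule val_mono[OF val]) simp
  moreover have "0 \<le> v (X p - {i})" by (rule val_nonneg[OF val])
  ultimately show ?thesis using a e1 by linarith
qed




locale game =
  fixes v :: "'a::finite set \<Rightarrow> real" and X :: "('a \<Rightarrow> real) \<Rightarrow> 'a set" and M :: "'a \<Rightarrow> real measure"
  assumes val: "valuation v" and gs: "gross_substitutes v" and dm: "decision_map v X"
    and gc: "GS_consistent X" and ne: "mixed_NE X M"
begin

abbreviation "P \<equiv> PiM UNIV M"
definition "U i y = (\<integral>\<^sup>+ p. ennreal (seller_utility X i (p(i:=y))) \<partial>P)"
definition "V i = (\<integral>\<^sup>+ p. ennreal (seller_utility X i p) \<partial>P)"
definition "mg i = v UNIV - v (UNIV - {i})"

lemma probM: "prob_space (M i)" using ne unfolding mixed_NE_def by blast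
lemma setsM: "sets (M i) = sets borel" using ne unfolding mixed_NE_def by blast
lemma spaceM: "space (M i) = UNIV" using sets_eq_imp_space_eq[OF setsM] by simp
lemma nnM: "AE x in M i. 0 \<le> x" using ne unfolding mixed_NE_def by blast
lemma measU[measurable]: "(\<lambda>p. seller_utility X i p) \<in> borel_measurable P" using ne unfolding mixed_NE_def by blast
lemma measUy: "0 \<le> y \<Longrightarrow> (\<lambda>p. seller_utility X i (p(i:=y))) \<in> borel_measurable P"
  using ne unfolding mixed_NE_def by blast
lemma NE: "0 \<le> y \<Longrightarrow> U i y \<le> V i" unfolding U_def V_def using ne unfolding mixed_NE_def by blast

lemma sigM: "sigma_finite_measure (M i)" by (rule prob_space_imp_sigma_finite[OF probM])

interpretation PS: product_prob_space M UNIV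
  by (intro product_prob_space.intro product_sigma_finite.intro product_prob_space_axioms.intro sigM probM)

lemma probP: "prob_space P" by (rule PS.P.prob_space_axioms)

lemma spaceP: "space P = UNIV" unfolding space_PiM spaceM by simp

lemma nnP: "AE p in P. \<forall>j. 0 \<le> p j"
proof -
  have "AE p in P. \<forall>j\<in>UNIV. 0 \<le> p j"
    by (rule AE_finite_allI) (auto intro: AE_PiM_component[where P="\<lambda>x. 0 \<le> x"] probM nnM)
  thus ?thesis by simp
qed

lemma meas_upd[measurable]: "(\<lambda>p. p(i:=y)) \<in> measurable P P"
proof -
  have "(\<lambda>p. (id p)(i := (\<lambda>_. y) p)) \<in> measurable P (PiM UNIV M)"
    by (rule measurable_fun_upd[where J=UNIV]) (auto simp: spaceM)
  thus ?thesis by simp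
qed

lemma FUB:
  assumes g[measurable]: "g \<in> borel_measurable P"
  shows "integral\<^sup>N P g = (\<integral>\<^sup>+ y. (\<integral>\<^sup>+ p. g (p(i:=y)) \<partial>P) \<partial>M i)"
proof -
  have I: "insert i (UNIV - {i}) = UNIV" by auto
  have g': "g \<in> borel_measurable (PiM (insert i (UNIV - {i})) M)" using g unfolding I .
  have 1: "integral\<^sup>N P g = (\<integral>\<^sup>+ y. (\<integral>\<^sup>+ x. g (x(i := y)) \<partial>PiM (UNIV - {i}) M) \<partial>M i)"
    using PS.product_nn_integral_insert_rev[of "UNIV - {i}" i g, OF _ _ g'] unfolding I by simp
  have 2: "(\<integral>\<^sup>+ p. g (p(i:=y)) \<partial>P) = (\<integral>\<^sup>+ x. g (x(i := y)) \<partial>PiM (UNIV - {i}) M)" for y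
  proof -
    have h: "(\<lambda>p. g (p(i:=y))) \<in> borel_measurable (PiM (insert i (UNIV - {i})) M)"
      unfolding I by measurable
    have "(\<integral>\<^sup>+ p. g (p(i:=y)) \<partial>P) = (\<integral>\<^sup>+ z. (\<integral>\<^sup>+ x. g ((x(i := z))(i:=y)) \<partial>PiM (UNIV - {i}) M) \<partial>M i)"
      using PS.product_nn_integral_insert_rev[of "UNIV - {i}" i, OF _ _ h] unfolding I by simp
    also have "\<dots> = (\<integral>\<^sup>+ z. (\<integral>\<^sup>+ x. g (x(i := y)) \<partial>PiM (UNIV - {i}) M) \<partial>M i)" by simp
    also have "\<dots> = (\<integral>\<^sup>+ x. g (x(i := y)) \<partial>PiM (UNIV - {i}) M)"
      using prob_space.emeasure_space_1[OF probM] by (simp add: nn_integral_const)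
    finally show ?thesis .
  qed
  show ?thesis unfolding 1 2 ..
qed

lemma FUB_inner:
  assumes g[measurable]: "g \<in> borel_measurable P"
  shows "(\<integral>\<^sup>+ p. g (p(i:=y)) \<partial>P) = (\<integral>\<^sup>+ x. g (x(i := y)) \<partial>PiM (UNIV - {i}) M)"
proof -
  have I: "insert i (UNIV - {i}) = UNIV" by auto
  have h: "(\<lambda>p. g (p(i:=y))) \<in> borel_measurable (PiM (insert i (UNIV - {i})) M)"
    unfolding I by measurable
  have "(\<integral>\<^sup>+ p. g (p(i:=y)) \<partial>P) = (\<integral>\<^sup>+ z. (\<integral>\<^sup>+ x. g ((x(i := z))(i:=y)) \<partial>PiM (UNIV - {i}) M) \<partial>M i)"
    using PS.product_nn_integral_insert_rev[of "UNIV - {i}" i, OF _ _ h] unfolding I by simp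
  also have "\<dots> = (\<integral>\<^sup>+ z. (\<integral>\<^sup>+ x. g (x(i := y)) \<partial>PiM (UNIV - {i}) M) \<partial>M i)" by simp
  also have "\<dots> = (\<integral>\<^sup>+ x. g (x(i := y)) \<partial>PiM (UNIV - {i}) M)"
    using prob_space.emeasure_space_1[OF probM] by (simp add: nn_integral_const)
  finally show ?thesis .
qed

lemma meas_comp[measurable]: "(\<lambda>p. p j) \<in> borel_measurable P"
proof -
  have "(\<lambda>p. p j) \<in> measurable P (M j)" by (rule measurable_component_singleton) simp
  also have "measurable P (M j) = measurable P borel" by (rule measurable_cong_sets[OF refl setsM])
  finally show ?thesis .
qed

lemma psf: "product_sigma_finite M" by (intro product_sigma_finite.intro sigM)

lemma meas_fun_sets[measurable]: "(\<lambda>y. U i y) \<in> borel_measurable (M i)"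
proof -
  interpret SF: sigma_finite_measure "PiM (UNIV - {i}) M" using product_sigma_finite.sigma_finite[OF psf, of "UNIV - {i}"] by simp
  have up: "(\<lambda>z. (snd z)(i := fst z)) \<in> measurable (M i \<Otimes>\<^sub>M PiM (UNIV - {i}) M) P"
    by (rule measurable_fun_upd[where J="UNIV - {i}"]) auto
  have "(\<lambda>z. ennreal (seller_utility X i ((snd z)(i := fst z)))) \<in> borel_measurable (M i \<Otimes>\<^sub>M PiM (UNIV - {i}) M)"
    using measurable_comp[OF up measU[of i]] by (simp add: comp_def)
  hence "case_prod (\<lambda>y x. ennreal (seller_utility X i (x(i := y)))) \<in> borel_measurable (M i \<Otimes>\<^sub>M PiM (UNIV - {i}) M)"
    by (simp add: case_prod_beta')
  hence "(\<lambda>y. \<integral>\<^sup>+ x. ennreal (seller_utility X i (x(i := y))) \<partial>PiM (UNIV - {i}) M) \<in> borel_measurable (M i)"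
    by (rule SF.borel_measurable_nn_integral)
  moreover have "U i y = (\<integral>\<^sup>+ x. ennreal (seller_utility X i (x(i := y))) \<partial>PiM (UNIV - {i}) M)" for y
    unfolding U_def by (rule FUB_inner) measurable
  ultimately show ?thesis by simp
qed

lemma IND:
  assumes I[measurable]: "I \<in> sets borel" and h[measurable]: "h \<in> borel_measurable P"
    and inv: "\<And>p y. h (p(i:=y)) = h p"
  shows "(\<integral>\<^sup>+ p. indicator {p. p i \<in> I} p * h p \<partial>P) = emeasure (M i) I * integral\<^sup>N P h"
proof -
  have m: "(\<lambda>p. indicator {p. p i \<in> I} p * h p) \<in> borel_measurable P" by measurable
  have "(\<integral>\<^sup>+ p. indicator {p. p i \<in> I} p * h p \<partial>P) = (\<integral>\<^sup>+ y. (\<integral>\<^sup>+ p. indicator {p. p i \<in> I} (p(i:=y)) * h (p(i:=y)) \<partial>P) \<partial>M i)"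
    by (rule FUB[OF m])
  also have "\<dots> = (\<integral>\<^sup>+ y. integral\<^sup>N P h * indicator I y \<partial>M i)"
  proof (rule nn_integral_cong)
    fix y
    show "(\<integral>\<^sup>+ p. indicator {p. p i \<in> I} (p(i:=y)) * h (p(i:=y)) \<partial>P) = integral\<^sup>N P h * indicator I y"
      by (cases "y \<in> I") (auto simp: indicator_def inv)
  qed
  also have "\<dots> = integral\<^sup>N P h * emeasure (M i) I"
    by (rule nn_integral_cmult_indicator) (simp add: setsM)
  finally show ?thesis by (simp add: mult.commute)
qed

lemma D2:
  assumes I[measurable]: "I \<in> sets borel"
  shows "(\<integral>\<^sup>+ p. indicator {p. p i \<in> I} p * ennreal (seller_utility X i p) \<partial>P) = (\<integral>\<^sup>+ y. indicator I y * U i y \<partial>M i)"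
proof -
  have m: "(\<lambda>p. indicator {p. p i \<in> I} p * ennreal (seller_utility X i p)) \<in> borel_measurable P" by measurable
  have "(\<integral>\<^sup>+ p. indicator {p. p i \<in> I} p * ennreal (seller_utility X i p) \<partial>P) = (\<integral>\<^sup>+ y. (\<integral>\<^sup>+ p. indicator {p. p i \<in> I} (p(i:=y)) * ennreal (seller_utility X i (p(i:=y))) \<partial>P) \<partial>M i)"
    by (rule FUB[OF m])
  also have "\<dots> = (\<integral>\<^sup>+ y. indicator I y * U i y \<partial>M i)"
  proof (rule nn_integral_cong)
    fix y
    show "(\<integral>\<^sup>+ p. indicator {p. p i \<in> I} (p(i:=y)) * ennreal (seller_utility X i (p(i:=y))) \<partial>P) = indicator I y * U i y"
      by (cases "y \<in> I") (auto simp: indicator_def U_def)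
  qed
  finally show ?thesis .
qed

lemma u_bound: "AE p in P. seller_utility X i p \<le> v UNIV \<and> 0 \<le> seller_utility X i p"
  using nnP
proof eventually_elim
  case (elim p)
  hence nn: "\<And>j. 0 \<le> p j" by blast
  show ?case
  proof (cases "i \<in> X p")
    case True
    thus ?thesis using sold_le[OF val dm nn True] nn unfolding seller_utility_def by simp
  next
    case False
    thus ?thesis using val_nonneg[OF val, of UNIV] unfolding seller_utility_def by simp
  qed
qed

lemma Vfin: "V i \<le> ennreal (v UNIV)"
proof -
  have "V i \<le> (\<integral>\<^sup>+ p. ennreal (v UNIV) \<partial>P)" unfolding V_def
    by (rule nn_integral_mono_AE) (use u_bound[of i] in \<open>eventually_elim, auto\<close>)
  also have "\<dots> = ennreal (v UNIV)" using PS.P.emeasure_space_1 by (simp add: nn_integral_const)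
  finally show ?thesis .
qed

lemma V_top: "V i < \<top>" using Vfin[of i] by (metis ennreal_less_top le_less_trans)

lemma U_int: "(\<integral>\<^sup>+ y. U i y \<partial>M i) = V i"
  using D2[of UNIV i] unfolding V_def by simp

lemma LB:
  assumes I[measurable]: "I \<in> sets borel"
  shows "V i * emeasure (M i) I \<le> (\<integral>\<^sup>+ y. indicator I y * U i y \<partial>M i)"
proof -
  define A where "A = (\<integral>\<^sup>+ y. indicator I y * U i y \<partial>M i)"
  define B where "B = (\<integral>\<^sup>+ y. indicator (UNIV - I) y * U i y \<partial>M i)"
  have I2[measurable]: "UNIV - I \<in> sets borel" by simp
  have I3[measurable]: "I \<in> sets (M i)" "UNIV - I \<in> sets (M i)" using setsM by auto
  have mU[measurable]: "U i \<in> borel_measurable (M i)" using meas_fun_sets by simp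
  have "(\<integral>\<^sup>+ y. U i y \<partial>M i) = (\<integral>\<^sup>+ y. indicator I y * U i y + indicator (UNIV - I) y * U i y \<partial>M i)"
    by (rule nn_integral_cong) (simp add: indicator_def)
  also have "\<dots> = A + B" unfolding A_def B_def by (rule nn_integral_add) measurable
  finally have AB: "A + B = V i" using U_int by simp
  have "B \<le> (\<integral>\<^sup>+ y. V i * indicator (UNIV - I) y \<partial>M i)" unfolding B_def
    by (rule nn_integral_mono_AE) (use nnM[of i] in \<open>eventually_elim, auto simp: indicator_def intro: NE\<close>)
  also have "\<dots> = V i * emeasure (M i) (UNIV - I)" by (rule nn_integral_cmult_indicator) (simp add: setsM)
  finally have Bl: "B \<le> V i * emeasure (M i) (UNIV - I)" .
  have sum1: "emeasure (M i) I + emeasure (M i) (UNIV - I) = 1"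
  proof -
    have "emeasure (M i) I + emeasure (M i) (UNIV - I) = emeasure (M i) (I \<union> (UNIV - I))"
      by (rule plus_emeasure) (auto simp: setsM)
    also have "\<dots> = 1" using prob_space.emeasure_space_1[OF probM, of i] spaceM by simp
    finally show ?thesis .
  qed
  have "V i * emeasure (M i) I + V i * emeasure (M i) (UNIV - I) = V i"
    using sum1 by (metis distrib_left mult.right_neutral)
  also have "\<dots> = A + B" using AB by simp
  also have "\<dots> \<le> A + V i * emeasure (M i) (UNIV - I)" using Bl by (simp add: add_left_mono)
  finally have le: "V i * emeasure (M i) I + V i * emeasure (M i) (UNIV - I) \<le> A + V i * emeasure (M i) (UNIV - I)" .
  have f1: "emeasure (M i) (UNIV - I) \<noteq> \<top>"
    using prob_space.emeasure_le_1[OF probM, of i "UNIV - I"] by (metis ennreal_one_neq_top top_unique)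
  have f2: "V i \<noteq> \<top>" using V_top[of i] by simp
  have fin: "V i * emeasure (M i) (UNIV - I) \<noteq> \<infinity>"
    using f1 f2 by (simp add: ennreal_mult_eq_top_iff)
  show ?thesis using le fin unfolding A_def by (metis add.commute ennreal_add_left_cancel_le)
qed

abbreviation "pr S \<equiv> measure P S"
definition "Vr i = enn2real (V i)"
definition "A i y = {p. 0 < seller_utility X i (p(i:=y))}"

lemma V_eq: "V i = ennreal (Vr i)" unfolding Vr_def using V_top[of i] by simp
lemma Vr_nn: "0 \<le> Vr i" unfolding Vr_def by simp

lemma A_sets[measurable]: "0 \<le> y \<Longrightarrow> A i y \<in> sets P"
proof -
  assume y: "0 \<le> y"
  have [measurable]: "(\<lambda>p. seller_utility X i (p(i:=y))) \<in> borel_measurable P" by (rule measUy[OF y])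
  have "A i y = {p \<in> space P. 0 < seller_utility X i (p(i:=y))}" unfolding A_def spaceP by simp
  also have "\<dots> \<in> sets P" by measurable
  finally show ?thesis .
qed

lemma A_iff: "0 < y \<Longrightarrow> p \<in> A i y \<longleftrightarrow> i \<in> X (p(i:=y))"
  unfolding A_def seller_utility_def by auto

lemma U_eq: assumes y: "0 < y" shows "U i y = ennreal (y * pr (A i y))"
proof -
  have "U i y = (\<integral>\<^sup>+ p. ennreal y * indicator (A i y) p \<partial>P)"
    unfolding U_def by (rule nn_integral_cong) (auto simp: A_def seller_utility_def indicator_def y)
  also have "\<dots> = ennreal y * emeasure P (A i y)" by (rule nn_integral_cmult_indicator) (use y in simp)
  also have "\<dots> = ennreal (y * pr (A i y))"
    using y by (simp add: PS.P.emeasure_eq_measure ennreal_mult)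
  finally show ?thesis .
qed

lemma NE_real: "0 < y \<Longrightarrow> y * pr (A i y) \<le> Vr i"
  using NE[of y i] U_eq[of y i] V_eq[of i] Vr_nn[of i] by (simp add: ennreal_le_iff)

lemma inactive_null: "V i = 0 \<Longrightarrow> 0 < y \<Longrightarrow> pr (A i y) = 0"
proof -
  assume "V i = 0" "0 < y"
  hence "Vr i = 0" unfolding Vr_def by simp
  hence "y * pr (A i y) \<le> 0" using NE_real[OF \<open>0 < y\<close>, of i] by simp
  thus ?thesis using \<open>0 < y\<close> by (simp add: mult_le_0_iff measure_nonneg) (metis measure_nonneg antisym)
qed

lemma emeasM: "emeasure (M i) I = ennreal (measure (M i) I)"
  by (rule PS.M.emeasure_eq_measure)

lemma comp_sets[measurable]: "I \<in> sets borel \<Longrightarrow> {p. p i \<in> I} \<in> sets P"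
proof -
  assume I: "I \<in> sets borel"
  have "{p. p i \<in> I} = (\<lambda>p. p i) -` I \<inter> space P" unfolding spaceP by auto
  also have "\<dots> \<in> sets P" by (rule measurable_sets[OF meas_comp I])
  finally show ?thesis .
qed

lemma LB_point:
  assumes t: "0 < t" and m: "0 < measure (M i) {t}"
  shows "Vr i \<le> t * pr (A i t)"
proof -
  have "V i * emeasure (M i) {t} \<le> (\<integral>\<^sup>+ y. indicator {t} y * U i y \<partial>M i)" by (rule LB) simp
  also have "\<dots> = (\<integral>\<^sup>+ y. U i t * indicator {t} y \<partial>M i)"
    by (rule nn_integral_cong) (simp add: indicator_def)
  also have "\<dots> = U i t * emeasure (M i) {t}" by (rule nn_integral_cmult_indicator) (simp add: setsM)
  moreover have "ennreal (t * pr (A i t) * measure (M i) {t}) = ennreal (t * pr (A i t)) * ennreal (measure (M i) {t})"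
    by (rule ennreal_mult) (use t in \<open>auto simp: measure_nonneg\<close>)
  moreover have "ennreal (Vr i * measure (M i) {t}) = ennreal (Vr i) * ennreal (measure (M i) {t})"
    by (rule ennreal_mult) (auto simp: measure_nonneg Vr_nn)
  ultimately have "ennreal (Vr i * measure (M i) {t}) \<le> ennreal (t * pr (A i t) * measure (M i) {t})"
    unfolding V_eq emeasM U_eq[OF t] by simp
  hence "Vr i * measure (M i) {t} \<le> t * pr (A i t) * measure (M i) {t}"
    using t by (subst (asm) ennreal_le_iff) (auto simp: measure_nonneg)
  thus ?thesis using m by simp
qed

lemma prob_comp:
  assumes I[measurable]: "I \<in> sets borel" shows "pr {p. p i \<in> I} = measure (M i) I"
proof -
  have "(\<integral>\<^sup>+ p. indicator {p. p i \<in> I} p * 1 \<partial>P) = emeasure (M i) I * integral\<^sup>N P (\<lambda>p. 1)"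
    by (rule IND) auto
  moreover have "(\<integral>\<^sup>+ p. indicator {p. p i \<in> I} p * 1 \<partial>P) = emeasure P {p. p i \<in> I}"
    by simp
  ultimately have "emeasure P {p. p i \<in> I} = emeasure (M i) I"
    using PS.P.emeasure_space_1 by (simp add: spaceP)
  thus ?thesis unfolding PS.P.emeasure_eq_measure emeasM by simp
qed

lemma prob_prod:
  assumes ij: "i \<noteq> j" and I[measurable]: "I \<in> sets borel" and J[measurable]: "J \<in> sets borel"
  shows "pr ({p. p i \<in> I} \<inter> {p. p j \<in> J}) = measure (M i) I * measure (M j) J"
proof -
  have "(\<integral>\<^sup>+ p. indicator {p. p i \<in> I} p * indicator {p. p j \<in> J} p \<partial>P) = emeasure (M i) I * integral\<^sup>N P (indicator {p. p j \<in> J})"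
    by (rule IND) (use ij in \<open>auto simp: indicator_def\<close>)
  moreover have "(\<integral>\<^sup>+ p. indicator {p. p i \<in> I} p * indicator {p. p j \<in> J} p \<partial>P) = emeasure P ({p. p i \<in> I} \<inter> {p. p j \<in> J})"
  proof -
    have "(\<integral>\<^sup>+ p. indicator {p. p i \<in> I} p * indicator {p. p j \<in> J} p \<partial>P) = (\<integral>\<^sup>+ p. indicator ({p. p i \<in> I} \<inter> {p. p j \<in> J}) p \<partial>P)"
      by (rule nn_integral_cong) (simp add: indicator_def)
    also have "\<dots> = emeasure P ({p. p i \<in> I} \<inter> {p. p j \<in> J})"
      by (rule nn_integral_indicator) (simp add: spaceP[symmetric])
    finally show ?thesis .
  qed
  moreover have "integral\<^sup>N P (indicator {p. p j \<in> J}) = emeasure P {p. p j \<in> J}"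
    by (rule nn_integral_indicator) (simp add: spaceP[symmetric])
  moreover have "emeasure P {p. p j \<in> J} = emeasure (M j) J"
    using prob_comp[OF J, of j] unfolding PS.P.emeasure_eq_measure emeasM by simp
  ultimately have "emeasure P ({p. p i \<in> I} \<inter> {p. p j \<in> J}) = emeasure (M i) I * emeasure (M j) J" by simp
  hence "ennreal (pr ({p. p i \<in> I} \<inter> {p. p j \<in> J})) = ennreal (measure (M i) I * measure (M j) J)"
    unfolding PS.P.emeasure_eq_measure emeasM by (simp add: ennreal_mult measure_nonneg)
  thus ?thesis by (simp add: measure_nonneg)
qed

lemma AE_comp: "(AE x in M i. Q x) \<Longrightarrow> AE p in P. Q (p i)"
  by (rule AE_PiM_component[where I=UNIV]) (auto intro: probM)

lemma mg_nn: "0 \<le> mg i" unfolding mg_def using val_mono[OF val, of "UNIV - {i}" UNIV] by simp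

definition "N0 = {p::'a\<Rightarrow>real. \<forall>l. 0 \<le> p l}"

lemma N0_sets[measurable]: "N0 \<in> sets P"
proof -
  have "N0 = (\<Inter>l\<in>UNIV. {p. p l \<in> {0..}})" unfolding N0_def by auto
  also have "\<dots> \<in> sets P" by (intro sets.finite_INT comp_sets) auto
  finally show ?thesis .
qed

lemma AE_N0: "AE p in P. p \<in> N0" using nnP unfolding N0_def by simp

lemma u_sets[measurable]: "{p. 0 < seller_utility X i p} \<in> sets P"
proof -
  have "{p. 0 < seller_utility X i p} = {p \<in> space P. 0 < seller_utility X i p}" unfolding spaceP by simp
  also have "\<dots> \<in> sets P" by measurable
  finally show ?thesis .
qed

lemma u_pos_iff: "0 < p i \<Longrightarrow> 0 < seller_utility X i p \<longleftrightarrow> i \<in> X p"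
  unfolding seller_utility_def by auto

lemma AE_le_iff: "(AE x in M i. x \<le> c) \<longleftrightarrow> measure (M i) {x. c < x} = 0"
proof -
  have s: "{x. c < x} \<in> sets (M i)" using setsM by simp
  show ?thesis using PS.M.prob_eq_0[OF s] by (auto elim!: eventually_mono simp: not_less)
qed

lemma AE_not_A: "V j = 0 \<Longrightarrow> 0 < y \<Longrightarrow> AE p in P. p \<notin> A j y"
  using PS.P.prob_eq_0[OF A_sets[of y j]] inactive_null[of j y] by simp

lemma Vr_pos_iff: "0 < Vr i \<longleftrightarrow> V i \<noteq> 0"
  unfolding V_eq using Vr_nn[of i] by auto

lemma sellable:
  assumes p0: "p \<in> N0" and iX: "i \<in> X p" and hi: "mg i < p i"
  shows "\<exists>j. j \<notin> X p \<and> (\<forall>y. 0 \<le> y \<longrightarrow> y < mg j + (p i - mg i) \<longrightarrow> j \<in> X (p(j:=y)))"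
proof -
  have nn: "\<And>l. 0 \<le> p l" using p0 unfolding N0_def by blast
  obtain j where jS: "j \<notin> X p" and h: "\<forall>y. y < mg j + (p i - mg i) \<longrightarrow> (\<forall>T \<in> demand v (p(j:=y)). j \<in> T)"
    using swap_witness[OF val gs decD[OF dm nn] iX] hi unfolding mg_def by blast
  have "\<forall>y. 0 \<le> y \<longrightarrow> y < mg j + (p i - mg i) \<longrightarrow> j \<in> X (p(j:=y))"
  proof (intro allI impI)
    fix y assume y0: "0 \<le> y" and yl: "y < mg j + (p i - mg i)"
    have "\<And>l. 0 \<le> (p(j:=y)) l" using nn y0 by simp
    thus "j \<in> X (p(j:=y))" using h yl decD[OF dm] by blast
  qed
  thus ?thesis using jS by blast
qed

lemma witness_price:
  assumes p0: "p \<in> N0" and jX: "j \<notin> X p" and h: "\<forall>y. 0 \<le> y \<longrightarrow> y < c \<longrightarrow> j \<in> X (p(j:=y))"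
  shows "c \<le> p j"
proof (rule ccontr)
  assume "\<not> c \<le> p j"
  moreover have "0 \<le> p j" using p0 unfolding N0_def by blast
  moreover have "0 \<le> p j \<longrightarrow> p j < c \<longrightarrow> j \<in> X (p(j := p j))" using h by blast
  ultimately have "j \<in> X (p(j := p j))" by (simp only: not_le)
  thus False using jX by simp
qed

lemma A_mono:
  assumes p0: "p \<in> N0" and pA: "p \<in> A j y" and y0: "0 < y'" and yy: "y' \<le> y"
  shows "p \<in> A j y'"
proof (cases "y' = y")
  case True thus ?thesis using pA by simp
next
  case False
  hence lt: "y' < y" using yy by simp
  have y: "0 < y" using y0 lt by simp
  have jX: "j \<in> X (p(j:=y))" using pA A_iff[OF y] by simp
  have nn: "\<And>l. 0 \<le> (p(j:=y)) l" using p0 y unfolding N0_def by simp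
  have "j \<in> X ((p(j:=y))(j:=y'))" by (rule sold_mono[OF dm nn jX]) (use y0 lt in auto)
  thus ?thesis using A_iff[OF y0] by simp
qed

lemma AE_G:
  assumes bound: "\<And>j. 0 < Vr j \<Longrightarrow> AE x in M j. x \<le> mg j + E" and y: "0 < y"
  shows "AE p in P. p \<in> N0 \<and> (\<forall>j. 0 < Vr j \<longrightarrow> p j \<le> mg j + E) \<and> (\<forall>j. \<not> 0 < Vr j \<longrightarrow> p \<notin> A j y)"
proof -
  have a1: "AE p in P. \<forall>j\<in>UNIV. 0 < Vr j \<longrightarrow> p j \<le> mg j + E"
  proof (rule AE_finite_allI)
    fix j show "AE p in P. 0 < Vr j \<longrightarrow> p j \<le> mg j + E"
      by (cases "0 < Vr j") (auto intro: AE_comp bound)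
  qed simp
  have a2: "AE p in P. \<forall>j\<in>UNIV. \<not> 0 < Vr j \<longrightarrow> p \<notin> A j y"
  proof (rule AE_finite_allI)
    fix j show "AE p in P. \<not> 0 < Vr j \<longrightarrow> p \<notin> A j y"
    proof (cases "0 < Vr j")
      case False
      hence "V j = 0" using Vr_pos_iff[of j] by simp
      thus ?thesis using AE_not_A[OF _ y] by (auto elim: eventually_mono)
    qed simp
  qed simp
  show ?thesis using AE_N0 a1 a2 by eventually_elim auto
qed

lemma atom_contra:
  assumes E: "0 < E"
    and bound: "\<And>j. 0 < Vr j \<Longrightarrow> AE x in M j. x \<le> mg j + E"
    and k: "0 < Vr k" and atom: "0 < measure (M k) {mg k + E}"
  shows False
proof -
  define t where "t j = mg j + E" for j
  have tpos: "\<And>j. 0 < t j" using mg_nn E unfolding t_def by (simp add: add_nonneg_pos)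
  have tE: "\<And>j. E \<le> t j" using mg_nn unfolding t_def by simp
  define B where "B = {p. p k \<in> {t k}} \<inter> {p. 0 < seller_utility X k p}"
  have Bs[measurable]: "B \<in> sets P" unfolding B_def by (intro sets.Int comp_sets u_sets) auto
  have pB: "0 < pr B"
  proof -
    have "ennreal (t k) * emeasure P B = (\<integral>\<^sup>+ p. ennreal (t k) * indicator B p \<partial>P)"
      by (rule nn_integral_cmult_indicator[symmetric]) simp
    also have "\<dots> = (\<integral>\<^sup>+ p. indicator {p. p k \<in> {t k}} p * ennreal (seller_utility X k p) \<partial>P)"
      by (rule nn_integral_cong) (auto simp: B_def indicator_def seller_utility_def tpos)
    also have "\<dots> = (\<integral>\<^sup>+ y. indicator {t k} y * U k y \<partial>M k)" by (rule D2) simp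
    finally have eq: "ennreal (t k) * emeasure P B = (\<integral>\<^sup>+ y. indicator {t k} y * U k y \<partial>M k)" .
    have "V k * emeasure (M k) {t k} \<le> ennreal (t k) * emeasure P B" unfolding eq by (rule LB) simp
    hence "ennreal (Vr k * measure (M k) {t k}) \<le> ennreal (t k * pr B)"
      unfolding V_eq emeasM PS.P.emeasure_eq_measure
      using tpos[of k] by (simp add: ennreal_mult[symmetric] Vr_nn measure_nonneg)
    hence "Vr k * measure (M k) {t k} \<le> t k * pr B"
      using tpos[of k] by (subst (asm) ennreal_le_iff) (auto simp: measure_nonneg)
    moreover have "0 < Vr k * measure (M k) {t k}" using k atom unfolding t_def by simp
    ultimately have "0 < t k * pr B" by linarith
    thus ?thesis using tpos[of k] by (simp add: zero_less_mult_iff)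
  qed
  define W where "W j \<delta> = {p. p j \<in> {t j}} \<inter> (UNIV - {p. 0 < seller_utility X j p}) \<inter> A j (t j - \<delta>) \<inter> N0" for j \<delta>
  have Ws[measurable]: "\<And>j \<delta>. \<delta> \<le> E \<Longrightarrow> W j \<delta> \<in> sets P"
  proof -
    fix j \<delta> assume "\<delta> \<le> E"
    hence "0 \<le> t j - \<delta>" using tE[of j] by simp
    hence [measurable]: "A j (t j - \<delta>) \<in> sets P" by (rule A_sets)
    have [measurable]: "UNIV - {p. 0 < seller_utility X j p} \<in> sets P"
      using sets.compl_sets[OF u_sets[of j]] spaceP by simp
    show "W j \<delta> \<in> sets P" unfolding W_def by (intro sets.Int comp_sets) auto
  qed
  define J where "J = {j. 0 < Vr j}"
  have cover: "pr B \<le> (\<Sum>j\<in>J. pr (W j \<delta>))" if \<delta>: "0 < \<delta>" "\<delta> < E" for \<delta>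
  proof -
    have E2: "0 < E / 2" using E by simp
    have AEG: "AE p in P. p \<in> N0 \<and> (\<forall>j. 0 < Vr j \<longrightarrow> p j \<le> mg j + E) \<and> (\<forall>j. \<not> 0 < Vr j \<longrightarrow> p \<notin> A j (E/2))"
      by (rule AE_G[OF _ E2]) (rule bound)
    have "AE p in P. p \<in> B \<longrightarrow> p \<in> (\<Union>j\<in>J. W j \<delta>)"
      using AEG
    proof eventually_elim
      case (elim p)
      hence p0: "p \<in> N0" and bnd: "\<And>j. 0 < Vr j \<Longrightarrow> p j \<le> mg j + E"
        and ina: "\<And>j. \<not> 0 < Vr j \<Longrightarrow> p \<notin> A j (E/2)" by auto
      show ?case
      proof
        assume "p \<in> B"
        hence pk: "p k = t k" and up: "0 < seller_utility X k p" unfolding B_def by auto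
        have kX: "k \<in> X p" using up u_pos_iff[of p k] pk tpos[of k] by simp
        have hi: "mg k < p k" using pk E unfolding t_def by simp
        obtain j where jX: "j \<notin> X p" and h: "\<forall>y. 0 \<le> y \<longrightarrow> y < mg j + (p k - mg k) \<longrightarrow> j \<in> X (p(j:=y))"
          using sellable[OF p0 kX hi] by blast
        have h': "\<forall>y. 0 \<le> y \<longrightarrow> y < t j \<longrightarrow> j \<in> X (p(j:=y))" using h pk unfolding t_def by simp
        have act: "0 < Vr j"
        proof (rule ccontr)
          assume na: "\<not> 0 < Vr j"
          have "j \<in> X (p(j := E/2))" using h' E tE[of j] by simp
          hence "p \<in> A j (E/2)" using A_iff[OF E2] by simp
          thus False using ina[OF na] by simp
        qed
        have "t j \<le> p j" by (rule witness_price[OF p0 jX h'])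
        hence pj: "p j = t j" using bnd[OF act] unfolding t_def by simp
        have "\<not> 0 < seller_utility X j p" using u_pos_iff[of p j] pj tpos[of j] jX by simp
        moreover have "p \<in> A j (t j - \<delta>)"
        proof -
          have "0 < t j - \<delta>" using \<delta> tE[of j] by simp
          moreover have "j \<in> X (p(j := t j - \<delta>))" using h' \<delta> tE[of j] by simp
          ultimately show ?thesis using A_iff by simp
        qed
        ultimately have "p \<in> W j \<delta>" unfolding W_def using pj p0 by simp
        thus "p \<in> (\<Union>j\<in>J. W j \<delta>)" using act unfolding J_def by blast
      qed
    qed
    hence "pr B \<le> pr (\<Union>j\<in>J. W j \<delta>)"
      by (rule PS.P.finite_measure_mono_AE) (use \<delta> Ws in \<open>auto intro!: sets.finite_UN\<close>)
    also have "\<dots> \<le> (\<Sum>j\<in>J. pr (W j \<delta>))"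
      by (rule PS.P.finite_measure_subadditive_finite) (use \<delta> Ws in auto)
    finally show ?thesis .
  qed
  define c where "c = pr B / real (card (UNIV::'a set))"
  have cardpos: "0 < real (card (UNIV::'a set))" by simp
  have cpos: "0 < c" unfolding c_def using pB cardpos by simp
  have Wmono: "pr (W j \<delta>) \<le> pr (W j \<delta>')" if "0 < \<delta>" "\<delta> \<le> \<delta>'" "\<delta>' < E" for j \<delta> \<delta>'
  proof (rule PS.P.finite_measure_mono)
    show "W j \<delta> \<subseteq> W j \<delta>'"
    proof
      fix p assume pW: "p \<in> W j \<delta>"
      have "p \<in> A j (t j - \<delta>')"
        by (rule A_mono[where y="t j - \<delta>"]) (use pW that tE[of j] in \<open>auto simp: W_def\<close>)
      thus "p \<in> W j \<delta>'" using pW unfolding W_def by auto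
    qed
    show "W j \<delta>' \<in> sets P" using Ws that by simp
  qed
  have "\<exists>j\<in>J. \<forall>\<delta>. 0 < \<delta> \<longrightarrow> \<delta> < E \<longrightarrow> c \<le> pr (W j \<delta>)"
  proof (rule ccontr)
    assume "\<not> ?thesis"
    hence "\<forall>j\<in>J. \<exists>\<delta>. 0 < \<delta> \<and> \<delta> < E \<and> pr (W j \<delta>) < c" by (auto simp: not_le)
    then obtain d where d: "\<And>j. j \<in> J \<Longrightarrow> 0 < d j \<and> d j < E \<and> pr (W j (d j)) < c" by metis
    define \<delta> where "\<delta> = Min (insert (E/2) (d ` J))"
    have finJ: "finite J" by simp
    have dpos: "0 < \<delta>" unfolding \<delta>_def using d E finJ by (subst Min_gr_iff) auto
    have "\<delta> \<le> E/2" unfolding \<delta>_def using finJ by (intro Min_le) auto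
    hence dE: "\<delta> < E" using E by linarith
    have dle: "\<And>j. j \<in> J \<Longrightarrow> \<delta> \<le> d j" unfolding \<delta>_def using finJ by (intro Min_le) auto
    have lt: "pr (W j \<delta>) < c" if jJ: "j \<in> J" for j
    proof -
      have "pr (W j \<delta>) \<le> pr (W j (d j))" using Wmono[of \<delta> "d j" j] dpos dle[OF jJ] d[OF jJ] by blast
      thus ?thesis using d[OF jJ] by linarith
    qed
    have "pr B \<le> (\<Sum>j\<in>J. pr (W j \<delta>))" by (rule cover[OF dpos dE])
    moreover have "(\<Sum>j\<in>J. pr (W j \<delta>)) \<le> real (card J) * c"
      using sum_mono[of J "\<lambda>j. pr (W j \<delta>)" "\<lambda>j. c"] lt by (simp add: less_imp_le)
    moreover have "real (card J) * c \<le> real (card (UNIV::'a set)) * c"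
      using cpos card_mono[of UNIV J] by (simp add: mult_right_mono)
    moreover have "real (card (UNIV::'a set)) * c = pr B" unfolding c_def using cardpos by simp
    moreover have "J \<noteq> {}" using calculation pB by auto
    moreover have "(\<Sum>j\<in>J. pr (W j \<delta>)) < real (card J) * c"
      using sum_strict_mono[of J "\<lambda>j. pr (W j \<delta>)" "\<lambda>j. c"] lt \<open>J \<noteq> {}\<close> by simp
    ultimately show False by linarith
  qed
  then obtain j where jJ: "j \<in> J" and hW: "\<And>\<delta>. 0 < \<delta> \<Longrightarrow> \<delta> < E \<Longrightarrow> c \<le> pr (W j \<delta>)" by blast
  have E2: "0 < E/2" "E/2 < E" using E by auto
  have atomj: "0 < measure (M j) {t j}"
  proof -
    have "pr (W j (E/2)) \<le> pr {p. p j \<in> {t j}}"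
      by (rule PS.P.finite_measure_mono) (use comp_sets[of "{t j}" j] in \<open>auto simp: W_def\<close>)
    also have "\<dots> = measure (M j) {t j}" by (rule prob_comp) simp
    finally show ?thesis using hW[OF E2] cpos by linarith
  qed
  have LBj: "Vr j \<le> t j * pr (A j (t j))" by (rule LB_point[OF tpos atomj])
  define a where "a = pr (A j (t j))"
  have a1: "a \<le> 1" unfolding a_def by (rule PS.P.prob_le_1)
  have c1: "c \<le> 1" using hW[OF E2] PS.P.prob_le_1[of "W j (E/2)"] by linarith
  have key: "(t j - \<delta>) * (a + c) \<le> Vr j" if \<delta>: "0 < \<delta>" "\<delta> < E" for \<delta>
  proof -
    have td: "0 < t j - \<delta>" using \<delta> tE[of j] by simp
    have sA[measurable]: "A j (t j) \<in> sets P" "A j (t j - \<delta>) \<in> sets P" using tpos[of j] td by (auto intro: A_sets)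
    have sW: "W j \<delta> \<in> sets P" using Ws \<delta> by simp
    have sub: "(A j (t j) \<inter> N0) \<union> W j \<delta> \<subseteq> A j (t j - \<delta>)"
    proof
      fix p assume "p \<in> (A j (t j) \<inter> N0) \<union> W j \<delta>"
      thus "p \<in> A j (t j - \<delta>)"
      proof
        assume "p \<in> A j (t j) \<inter> N0"
        thus ?thesis using A_mono[of p j "t j" "t j - \<delta>"] td \<delta> by auto
      next
        assume "p \<in> W j \<delta>" thus ?thesis unfolding W_def by simp
      qed
    qed
    have disj: "(A j (t j) \<inter> N0) \<inter> W j \<delta> = {}"
    proof (rule ccontr)
      assume "\<not> ?thesis"
      then obtain p where p1: "p \<in> A j (t j)" and p2: "p \<in> W j \<delta>" by blast
      have "p(j := t j) = p" using p2 unfolding W_def by auto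
      hence "0 < seller_utility X j p" using p1 unfolding A_def by simp
      thus False using p2 unfolding W_def by simp
    qed
    have "pr ((A j (t j) \<inter> N0) \<union> W j \<delta>) = pr (A j (t j) \<inter> N0) + pr (W j \<delta>)"
      by (rule PS.P.finite_measure_Union) (use sW disj in auto)
    moreover have "pr (A j (t j) \<inter> N0) = a"
      unfolding a_def by (rule measure_eq_AE) (use AE_N0 sA in \<open>auto elim: eventually_mono\<close>)
    moreover have "pr ((A j (t j) \<inter> N0) \<union> W j \<delta>) \<le> pr (A j (t j - \<delta>))"
      by (rule PS.P.finite_measure_mono[OF sub]) simp
    ultimately have "a + c \<le> pr (A j (t j - \<delta>))" using hW[OF \<delta>] by linarith
    hence "(t j - \<delta>) * (a + c) \<le> (t j - \<delta>) * pr (A j (t j - \<delta>))" using td by (simp add: mult_left_mono)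
    also have "\<dots> \<le> Vr j" by (rule NE_real[OF td])
    finally show ?thesis .
  qed
  define \<delta> where "\<delta> = min (E/2) (t j * c / 4)"
  have dpos: "0 < \<delta>" unfolding \<delta>_def using E tpos[of j] cpos by simp
  have dE: "\<delta> < E" unfolding \<delta>_def using E by simp
  have k1: "(t j - \<delta>) * (a + c) \<le> t j * a" using key[OF dpos dE] LBj unfolding a_def by linarith
  have "(t j - \<delta>) * (a + c) = t j * a + t j * c - \<delta> * (a + c)" by (simp add: algebra_simps)
  hence k2: "t j * c \<le> \<delta> * (a + c)" using k1 by linarith
  have "\<delta> * (a + c) \<le> \<delta> * 2" using a1 c1 dpos by (simp add: mult_left_mono)
  moreover have "\<delta> * 2 \<le> t j * c / 2" unfolding \<delta>_def by simp
  ultimately have "t j * c \<le> t j * c / 2" using k2 by linarith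
  moreover have "0 < t j * c" using tpos[of j] cpos by simp
  ultimately show False by linarith
qed

lemma noatom_contra:
  assumes E: "0 < E"
    and bound: "\<And>j. 0 < Vr j \<Longrightarrow> AE x in M j. x \<le> mg j + E"
    and i: "0 < Vr i" and pos: "\<And>l. l < E \<Longrightarrow> 0 < measure (M i) {x. mg i + l \<le> x}"
    and noatom: "\<And>j. 0 < Vr j \<Longrightarrow> measure (M j) {mg j + E} = 0"
  shows False
proof -
  define J where "J = {j. 0 < Vr j \<and> j \<noteq> i}"
  define Js where "Js l j = {x. mg j + l \<le> x \<and> x \<le> mg j + E}" for l j
  have Js_sets[measurable]: "Js l j \<in> sets borel" for l j unfolding Js_def by measurable
  have tpos: "0 < mg i + E" using mg_nn[of i] E by linarith
  have main: "Vr i \<le> (mg i + E) * (\<Sum>j\<in>J. measure (M j) (Js l j))" if l: "0 < l" "l < E" for l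
  proof -
    define I where "I = {x. mg i + l \<le> x}"
    have Is[measurable]: "I \<in> sets borel" unfolding I_def by measurable
    define Q where "Q = {p. p i \<in> I} \<inter> {p. 0 < seller_utility X i p}"
    have Qs[measurable]: "Q \<in> sets P" unfolding Q_def by (intro sets.Int comp_sets u_sets) auto
    have "V i * emeasure (M i) I \<le> (\<integral>\<^sup>+ y. indicator I y * U i y \<partial>M i)" by (rule LB) simp
    also have "\<dots> = (\<integral>\<^sup>+ p. indicator {p. p i \<in> I} p * ennreal (seller_utility X i p) \<partial>P)"
      by (rule D2[symmetric]) simp
    also have "\<dots> \<le> (\<integral>\<^sup>+ p. ennreal (mg i + E) * indicator Q p \<partial>P)"
    proof (rule nn_integral_mono_AE)
      show "AE p in P. indicator {p. p i \<in> I} p * ennreal (seller_utility X i p) \<le> ennreal (mg i + E) * indicator Q p"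
        using AE_comp[OF bound[OF i]]
      proof eventually_elim
        case (elim p)
        show ?case
        proof (cases "p i \<in> I \<and> 0 < seller_utility X i p")
          case True
          hence "seller_utility X i p = p i" unfolding seller_utility_def by (auto split: if_splits)
          thus ?thesis using True elim unfolding Q_def by (auto simp: indicator_def)
        next
          case False
          thus ?thesis by (auto simp: indicator_def ennreal_neg not_less)
        qed
      qed
    qed
    also have "\<dots> = ennreal (mg i + E) * emeasure P Q" by (rule nn_integral_cmult_indicator) simp
    finally have "ennreal (Vr i * measure (M i) I) \<le> ennreal ((mg i + E) * pr Q)"
      unfolding V_eq emeasM PS.P.emeasure_eq_measure
      using tpos by (simp add: ennreal_mult[symmetric] Vr_nn measure_nonneg)
    hence le1: "Vr i * measure (M i) I \<le> (mg i + E) * pr Q"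
      using tpos by (subst (asm) ennreal_le_iff) (auto simp: measure_nonneg)
    have l2: "0 < l/2" using l by simp
    have AEG: "AE p in P. p \<in> N0 \<and> (\<forall>j. 0 < Vr j \<longrightarrow> p j \<le> mg j + E) \<and> (\<forall>j. \<not> 0 < Vr j \<longrightarrow> p \<notin> A j (l/2))"
      by (rule AE_G[OF _ l2]) (rule bound)
    have "AE p in P. p \<in> Q \<longrightarrow> p \<in> (\<Union>j\<in>J. {p. p i \<in> I} \<inter> {p. p j \<in> Js l j})"
      using AEG
    proof eventually_elim
      case (elim p)
      hence p0: "p \<in> N0" and bnd: "\<And>j. 0 < Vr j \<Longrightarrow> p j \<le> mg j + E"
        and ina: "\<And>j. \<not> 0 < Vr j \<Longrightarrow> p \<notin> A j (l/2)" by auto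
      show ?case
      proof
        assume "p \<in> Q"
        hence pI: "mg i + l \<le> p i" and up: "0 < seller_utility X i p" unfolding Q_def I_def by auto
        have pipos: "0 < p i" using pI mg_nn[of i] l by linarith
        have iX: "i \<in> X p" using up u_pos_iff[of p i] pipos by simp
        have hi: "mg i < p i" using pI l by simp
        obtain j where jX: "j \<notin> X p" and h: "\<forall>y. 0 \<le> y \<longrightarrow> y < mg j + (p i - mg i) \<longrightarrow> j \<in> X (p(j:=y))"
          using sellable[OF p0 iX hi] by blast
        have h': "\<forall>y. 0 \<le> y \<longrightarrow> y < mg j + l \<longrightarrow> j \<in> X (p(j:=y))" using h pI by force
        have ji: "j \<noteq> i" using jX iX by blast
        have act: "0 < Vr j"
        proof (rule ccontr)
          assume na: "\<not> 0 < Vr j"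
          have "j \<in> X (p(j := l/2))" using h' l mg_nn[of j] by simp
          hence "p \<in> A j (l/2)" using A_iff[OF l2] by simp
          thus False using ina[OF na] by simp
        qed
        have "mg j + l \<le> p j" by (rule witness_price[OF p0 jX h'])
        hence "p j \<in> Js l j" using bnd[OF act] unfolding Js_def by simp
        moreover have "j \<in> J" unfolding J_def using act ji by simp
        ultimately show "p \<in> (\<Union>j\<in>J. {p. p i \<in> I} \<inter> {p. p j \<in> Js l j})" using pI unfolding I_def by blast
      qed
    qed
    hence "pr Q \<le> pr (\<Union>j\<in>J. {p. p i \<in> I} \<inter> {p. p j \<in> Js l j})"
      by (rule PS.P.finite_measure_mono_AE) (auto intro!: sets.finite_UN sets.Int comp_sets)
    also have "\<dots> \<le> (\<Sum>j\<in>J. pr ({p. p i \<in> I} \<inter> {p. p j \<in> Js l j}))"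
      by (rule PS.P.finite_measure_subadditive_finite) (auto intro!: sets.Int comp_sets)
    also have "\<dots> = (\<Sum>j\<in>J. measure (M i) I * measure (M j) (Js l j))"
      by (rule sum.cong) (auto simp: J_def intro!: prob_prod)
    also have "\<dots> = measure (M i) I * (\<Sum>j\<in>J. measure (M j) (Js l j))" by (simp add: sum_distrib_left)
    finally have "pr Q \<le> measure (M i) I * (\<Sum>j\<in>J. measure (M j) (Js l j))" .
    hence "Vr i * measure (M i) I \<le> (mg i + E) * (measure (M i) I * (\<Sum>j\<in>J. measure (M j) (Js l j)))"
      using le1 tpos by (meson mult_left_mono less_imp_le order_trans)
    hence "measure (M i) I * Vr i \<le> measure (M i) I * ((mg i + E) * (\<Sum>j\<in>J. measure (M j) (Js l j)))"
      by (simp add: algebra_simps)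
    moreover have "0 < measure (M i) I" unfolding I_def by (rule pos[OF l(2)])
    ultimately show ?thesis by simp
  qed
  define ls where "ls n = E - E / real (n + 2)" for n
  have ls_pos: "0 < ls n" for n
  proof -
    have "E / real (n + 2) < E / 1" by (rule divide_strict_left_mono) (use E in auto)
    thus ?thesis unfolding ls_def by simp
  qed
  have ls_lt: "ls n < E" for n unfolding ls_def using E by simp
  have ls_mono: "ls m \<le> ls n" if "m \<le> n" for m n
    unfolding ls_def using E that by (simp add: frac_le)
  have lim1: "(\<lambda>n. measure (M j) (Js (ls n) j)) \<longlonglongrightarrow> 0" if jJ: "j \<in> J" for j
  proof -
    have "(\<lambda>n. measure (M j) (Js (ls n) j)) \<longlonglongrightarrow> measure (M j) (\<Inter>n. Js (ls n) j)"
    proof (rule PS.M.finite_Lim_measure_decseq)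
      show "range (\<lambda>n. Js (ls n) j) \<subseteq> sets (M j)" using setsM by auto
      show "decseq (\<lambda>n. Js (ls n) j)" unfolding decseq_def Js_def using ls_mono by force
    qed
    moreover have "(\<Inter>n. Js (ls n) j) = {mg j + E}"
    proof
      show "{mg j + E} \<subseteq> (\<Inter>n. Js (ls n) j)" unfolding Js_def using ls_lt by (auto simp: less_imp_le)
      show "(\<Inter>n. Js (ls n) j) \<subseteq> {mg j + E}"
      proof
        fix x assume x: "x \<in> (\<Inter>n. Js (ls n) j)"
        hence xl: "x \<le> mg j + E" unfolding Js_def by auto
        have "\<not> x < mg j + E"
        proof
          assume xlt: "x < mg j + E"
          hence "0 < (mg j + E - x) / E" using E by simp
          then obtain n where n: "inverse (real (Suc n)) < (mg j + E - x) / E" using reals_Archimedean by blast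
          have "E / real (n + 2) \<le> E * inverse (real (Suc n))"
            using E by (simp add: field_simps)
          also have "\<dots> < mg j + E - x" using n E by (simp add: field_simps)
          finally have "x < mg j + ls n" unfolding ls_def by simp
          moreover have "mg j + ls n \<le> x" using x unfolding Js_def by auto
          ultimately show False by simp
        qed
        thus "x \<in> {mg j + E}" using xl by simp
      qed
    qed
    moreover have "measure (M j) {mg j + E} = 0" using noatom jJ unfolding J_def by simp
    ultimately show ?thesis by simp
  qed
  have "(\<lambda>n. \<Sum>j\<in>J. measure (M j) (Js (ls n) j)) \<longlonglongrightarrow> 0"
    by (rule tendsto_null_sum) (rule lim1)
  moreover have "0 < Vr i / (mg i + E)" using i tpos by simp
  ultimately have "eventually (\<lambda>n. (\<Sum>j\<in>J. measure (M j) (Js (ls n) j)) < Vr i / (mg i + E)) sequentially"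
    by (rule order_tendstoD)
  then obtain n where n: "(\<Sum>j\<in>J. measure (M j) (Js (ls n) j)) < Vr i / (mg i + E)"
    by (auto dest: eventually_happens)
  have "Vr i \<le> (mg i + E) * (\<Sum>j\<in>J. measure (M j) (Js (ls n) j))" by (rule main[OF ls_pos ls_lt])
  also have "\<dots> < (mg i + E) * (Vr i / (mg i + E))" by (rule mult_strict_left_mono[OF n tpos])
  also have "\<dots> = Vr i" using tpos by simp
  finally show False by simp
qed

lemma act_bound:
  assumes act: "0 < Vr i" shows "AE x in M i. x \<le> v UNIV"
proof -
  define I where "I = {x::real. v UNIV < x}"
  have Is[measurable]: "I \<in> sets borel" unfolding I_def by measurable
  have U0: "U i y = 0" if y: "y \<in> I" for y
  proof -
    have ypos: "0 < y" using y val_nonneg[OF val, of UNIV] unfolding I_def by simp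
    have "AE p in P. p \<notin> A i y"
      using AE_N0
    proof eventually_elim
      case (elim p)
      show ?case
      proof
        assume "p \<in> A i y"
        hence iX: "i \<in> X (p(i:=y))" using A_iff[OF ypos] by simp
        have "\<And>l. 0 \<le> (p(i:=y)) l" using elim ypos unfolding N0_def by simp
        from sold_le[OF val dm this iX] show False using y unfolding I_def by simp
      qed
    qed
    hence "pr (A i y) = 0" using PS.P.prob_eq_0[OF A_sets[of y i]] ypos by simp
    thus ?thesis using U_eq[OF ypos] by simp
  qed
  have "V i * emeasure (M i) I \<le> (\<integral>\<^sup>+ y. indicator I y * U i y \<partial>M i)" by (rule LB) simp
  also have "\<dots> = (\<integral>\<^sup>+ y. 0 \<partial>M i)" by (rule nn_integral_cong) (auto simp: indicator_def U0)
  finally have "ennreal (Vr i * measure (M i) I) \<le> 0"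
    unfolding V_eq emeasM by (simp add: ennreal_mult[symmetric] Vr_nn measure_nonneg)
  hence "Vr i * measure (M i) I \<le> 0" by (simp add: ennreal_eq_0_iff)
  hence "measure (M i) I = 0" using act by (simp add: mult_le_0_iff measure_nonneg) (metis measure_nonneg antisym)
  thus ?thesis unfolding AE_le_iff I_def .
qed

lemma mg_le_Vr: "mg i \<le> Vr i"
proof (cases "0 < mg i")
  case False thus ?thesis using Vr_nn[of i] by simp
next
  case True
  show ?thesis
  proof (rule dense_le_bounded[OF True])
    fix w assume w: "0 < w" "w < mg i"
    have "AE p in P. p \<in> A i w"
      using AE_N0
    proof eventually_elim
      case (elim p)
      have nn: "\<And>l. 0 \<le> (p(i:=w)) l" using elim w unfolding N0_def by simp
      have "i \<in> X (p(i:=w))" by (rule sold_below[OF val dm gc nn]) (use w in \<open>simp add: mg_def\<close>)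
      thus ?case using A_iff[OF w(1)] by simp
    qed
    hence "pr (A i w) = 1" using PS.P.prob_eq_1[OF A_sets[of w i]] w by simp
    thus "w \<le> Vr i" using NE_real[OF w(1), of i] by simp
  qed
qed

lemma AE_from_S:
  assumes h: "\<And>l. c < l \<Longrightarrow> \<not> 0 < measure (M j) {x. mg j + l \<le> x}"
  shows "AE x in M j. x \<le> mg j + c"
proof -
  have "AE x in M j. \<forall>n::nat. x < mg j + (c + 1 / real (Suc n))"
  proof (subst AE_all_countable, intro allI)
    fix n :: nat
    have "measure (M j) {x. mg j + (c + 1 / real (Suc n)) \<le> x} = 0"
      using h[of "c + 1 / real (Suc n)"] measure_nonneg[of "M j"] by (simp add: not_less) (metis antisym measure_nonneg)
    moreover have "{x. mg j + (c + 1 / real (Suc n)) \<le> x} \<in> sets (M j)" using setsM by simp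
    ultimately have "AE x in M j. x \<notin> {x. mg j + (c + 1 / real (Suc n)) \<le> x}"
      using PS.M.prob_eq_0 by blast
    thus "AE x in M j. x < mg j + (c + 1 / real (Suc n))" by (auto elim: eventually_mono)
  qed
  thus ?thesis
  proof eventually_elim
    case (elim x)
    show ?case
    proof (rule ccontr)
      assume "\<not> x \<le> mg j + c"
      hence "0 < x - (mg j + c)" by simp
      then obtain n where "inverse (real (Suc n)) < x - (mg j + c)" using reals_Archimedean by blast
      thus False using elim[rule_format, of n] by (simp add: field_simps)
    qed
  qed
qed

lemma claim: assumes act: "0 < Vr i0" shows "AE x in M i0. x \<le> mg i0"
proof (rule ccontr)
  assume bad: "\<not> ?thesis"
  define Act where "Act = {i. 0 < Vr i}"
  define S where "S i = {l. 0 < measure (M i) {x. mg i + l \<le> x}}" for i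
  have bdd: "bdd_above (S i)" if "i \<in> Act" for i
  proof (rule bdd_aboveI)
    fix l assume l: "l \<in> S i"
    show "l \<le> v UNIV"
    proof (rule ccontr)
      assume "\<not> l \<le> v UNIV"
      hence sub: "{x. mg i + l \<le> x} \<subseteq> {x. v UNIV < x}" using mg_nn[of i] by auto
      have "measure (M i) {x. v UNIV < x} = 0" using act_bound[of i] that unfolding Act_def AE_le_iff by simp
      moreover have "measure (M i) {x. mg i + l \<le> x} \<le> measure (M i) {x. v UNIV < x}"
        by (rule PS.M.finite_measure_mono[OF sub]) (simp add: setsM)
      ultimately show False using l unfolding S_def by simp
    qed
  qed
  have nemp: "- mg i \<in> S i" for i
  proof -
    have "AE x in M i. x \<in> {x. 0 \<le> x}" using nnM by simp
    hence "measure (M i) {x. 0 \<le> x} = 1" using PS.M.prob_eq_1[of "{x. 0 \<le> x}" i] setsM by simp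
    thus ?thesis unfolding S_def by simp
  qed
  define e where "e i = Sup (S i)" for i
  have finA: "finite Act" by simp
  have i0A: "i0 \<in> Act" using act unfolding Act_def by simp
  define Em where "Em = Max (e ` Act)"
  have e_le: "e i \<le> Em" if "i \<in> Act" for i unfolding Em_def using finA that by simp
  have notS: "\<not> 0 < measure (M j) {x. mg j + l \<le> x}" if "j \<in> Act" "Em < l" for j l
  proof
    assume "0 < measure (M j) {x. mg j + l \<le> x}"
    hence "l \<in> S j" unfolding S_def by simp
    hence "l \<le> e j" unfolding e_def by (rule cSup_upper[OF _ bdd[OF that(1)]])
    thus False using e_le[OF that(1)] that(2) by simp
  qed
  have bound: "AE x in M j. x \<le> mg j + Em" if "0 < Vr j" for j
    by (rule AE_from_S) (use notS that in \<open>auto simp: Act_def\<close>)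
  have Epos: "0 < Em"
  proof (rule ccontr)
    assume "\<not> 0 < Em"
    hence "AE x in M i0. x \<le> mg i0" using bound[OF act] by (auto elim: eventually_mono)
    thus False using bad by simp
  qed
  obtain ist where istA: "ist \<in> Act" and eist: "e ist = Em"
    unfolding Em_def using finA i0A by (metis (mono_tags, lifting) Max_in empty_iff finite_imageI image_iff)
  have pos: "0 < measure (M ist) {x. mg ist + l \<le> x}" if "l < Em" for l
  proof -
    have "l < Sup (S ist)" using that eist unfolding e_def by simp
    then obtain s where s: "s \<in> S ist" "l < s"
      using less_cSup_iff[of "S ist" l] nemp[of ist] bdd[OF istA] by blast
    have "measure (M ist) {x. mg ist + s \<le> x} \<le> measure (M ist) {x. mg ist + l \<le> x}"
      by (rule PS.M.finite_measure_mono) (use s in \<open>auto simp: setsM\<close>)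
    thus ?thesis using s unfolding S_def by simp
  qed
  have istV: "0 < Vr ist" using istA unfolding Act_def by simp
  show False
  proof (cases "\<exists>k. 0 < Vr k \<and> 0 < measure (M k) {mg k + Em}")
    case True
    then obtain k where "0 < Vr k" "0 < measure (M k) {mg k + Em}" by blast
    thus False using atom_contra[OF Epos bound] by blast
  next
    case False
    hence na: "\<And>j. 0 < Vr j \<Longrightarrow> measure (M j) {mg j + Em} = 0"
      using measure_nonneg by (metis antisym not_le)
    show False by (rule noatom_contra[OF Epos bound istV pos na])
  qed
qed

lemma final_pos:
  assumes m: "0 < mg i" shows "AE p in P. p i = mg i \<and> i \<in> X p"
proof -
  have act: "0 < Vr i" using mg_le_Vr[of i] m by simp
  have AEle: "AE p in P. p i \<le> mg i" by (rule AE_comp[OF claim[OF act]])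
  have AEu: "AE p in P. 0 \<le> seller_utility X i p \<and> seller_utility X i p \<le> mg i"
    using AEle AE_N0
  proof eventually_elim
    case (elim p) thus ?case using m unfolding seller_utility_def N0_def by auto
  qed
  define f where "f p = ennreal (mg i - seller_utility X i p)" for p
  have fm[measurable]: "f \<in> borel_measurable P" unfolding f_def by measurable
  have "V i + integral\<^sup>N P f = (\<integral>\<^sup>+ p. ennreal (seller_utility X i p) + f p \<partial>P)"
    unfolding V_def by (rule nn_integral_add[symmetric]) measurable
  also have "\<dots> = (\<integral>\<^sup>+ p. ennreal (mg i) \<partial>P)"
    by (rule nn_integral_cong_AE) (use AEu in \<open>eventually_elim, auto simp: f_def ennreal_plus[symmetric]\<close>)
  also have "\<dots> = ennreal (mg i)" using PS.P.emeasure_space_1 by (simp add: nn_integral_const)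
  finally have eq: "V i + integral\<^sup>N P f = ennreal (mg i)" .
  have "ennreal (mg i) \<le> V i" unfolding V_eq using mg_le_Vr[of i] by (rule ennreal_leI)
  hence "ennreal (mg i) + integral\<^sup>N P f \<le> ennreal (mg i) + 0" using eq by (metis add.right_neutral add_right_mono)
  hence "integral\<^sup>N P f = 0" by (simp add: ennreal_add_left_cancel_le)
  hence "AE p in P. f p = 0" by (simp add: nn_integral_0_iff_AE)
  thus ?thesis using AEu AEle
  proof eventually_elim
    case (elim p)
    hence "mg i \<le> seller_utility X i p" unfolding f_def by (simp add: ennreal_eq_0_iff)
    hence "0 < seller_utility X i p" using m by simp
    hence "i \<in> X p" and "seller_utility X i p = p i" unfolding seller_utility_def by (auto split: if_splits)
    thus ?case using elim \<open>mg i \<le> seller_utility X i p\<close> by simp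
  qed
qed

lemma final_zero:
  assumes m: "mg i = 0" shows "V i = 0"
proof (rule ccontr)
  assume "V i \<noteq> 0"
  hence act: "0 < Vr i" using Vr_pos_iff by simp
  have AEle: "AE p in P. p i \<le> 0" using AE_comp[OF claim[OF act]] m by simp
  have "V i = (\<integral>\<^sup>+ p. 0 \<partial>P)" unfolding V_def
    by (rule nn_integral_cong_AE) (use AEle in \<open>eventually_elim, auto simp: seller_utility_def ennreal_neg\<close>)
  thus False using \<open>V i \<noteq> 0\<close> by simp
qed

end


theorem mainTheorem9:
  fixes v :: "('a::finite) set \<Rightarrow> real"
    and X :: "('a \<Rightarrow> real) \<Rightarrow> 'a set"
    and M :: "'a \<Rightarrow> real measure"
  assumes "valuation v" and "gross_substitutes v"
    and "decision_map v X" and "GS_consistent X"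
    and "mixed_NE X M"
  shows "\<forall>i. (marginal v {i} (UNIV - {i}) > 0 \<longrightarrow>
              (AE p in PiM UNIV M. p i = marginal v {i} (UNIV - {i}) \<and> i \<in> X p))
          \<and> (marginal v {i} (UNIV - {i}) = 0 \<longrightarrow>
              (\<integral>\<^sup>+ p. ennreal (seller_utility X i p) \<partial>PiM UNIV M) = 0)"
proof -
  interpret Gm: game v X M by (rule game.intro) (rule assms)+
  show ?thesis
  proof (intro allI conjI impI)
    fix i
    assume h: "marginal v {i} (UNIV - {i}) > 0"
    hence "0 < Gm.mg i" unfolding marg_eq Gm.mg_def .
    hence "AE p in PiM UNIV M. p i = Gm.mg i \<and> i \<in> X p" by (rule Gm.final_pos)
    thus "AE p in PiM UNIV M. p i = marginal v {i} (UNIV - {i}) \<and> i \<in> X p"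
      unfolding marg_eq Gm.mg_def .
  next
    fix i
    assume h: "marginal v {i} (UNIV - {i}) = 0"
    hence "Gm.mg i = 0" unfolding marg_eq Gm.mg_def .
    hence "Gm.V i = 0" by (rule Gm.final_zero)
    thus "(\<integral>\<^sup>+ p. ennreal (seller_utility X i p) \<partial>PiM UNIV M) = 0" unfolding Gm.V_def .
  qed
qed

end
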